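(* Suppose assumptions (A1)–(A5) below hold. Then the maximum likelihood estimation problem $$\max_{(x_t,\theta_t,u_t)}\ \sum_{i=0}^{n_x}\log p_\nu(\tilde x_{t_i}-Dx_{t_i})+\sum_{j=0}^{n_u}\log p_\omega(\tilde y_{\tau_j}-Cu_{\tau_j})$$ subject to, for all $t$: $u_t\in\arg\max\{f(x_{t+1},u,\theta_t,\pi_t):x_{t+1}=h(x_t,u),\ u\in\mathcal U\}$, $x_{t+1}=h(x_t,u_t)$, $\theta_{t+1}=g(x_t,u_t,\theta_t,\pi_t)$, $x_t\in\mathcal X$, $\theta_t\in\Theta$ (with the incentives $\pi_t$ given), can be expressed as a mixed integer linear program.
   Context: Model. Let $\mathcal X,\mathcal U,\Pi,\Theta$ be compact finite-dimensional sets with $\mathcal X,\mathcal U,\Theta$ convex. At each discrete time $t$ an agent has system state $x_t\in\mathcal X$, motivational state $\theta_t\in\Theta$, decision $u_t\in\mathcal U$; the coordinator applies known incentive $\pi_t\in\Pi$. Observations: $\tilde x_{t_i}=Dx_{t_i}+\nu_{t_i}$ ($i=0,\dots,n_x$), $\tilde y_{\tau_i}=Cu_{\tau_i}+\omega_{\tau_i}$ ($i=0,\dots,n_u$), with known matrices $C,D$ and noise densities $p_\nu,p_\omega$. $(a;b)$ denotes vertical concatenation. Assumptions: (A1) $\mathcal X,\mathcal U,\Pi,\Theta$ bounded finite-dimensional; $\mathcal X,\mathcal U,\Theta$ convex polyhedra described by finitely many linear inequalities; $\Pi$ described by finitely many mixed integer linear constraints. (A2) $f:\mathcal X\times\mathcal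 U\times\Theta\times\Pi\to\mathbb R$ deterministic, concave in $x$, strictly concave in $u$, concave in $\theta$, with $f(x,u,\theta,\pi)=-(x;u)^TQ(x;u)+(\theta;\pi)^TH(x;u)+\sum_{i=1}^K\min_{j\in J_i}\{F_{i,j}(x;u;\theta;\pi)+\zeta_{i,j}\}$, $Q$ positive semidefinite, $H,F_{i,j}$ matrices, $\zeta_{i,j}$ scalars, $J_i$ finite index sets. (A3) $h,g$ deterministic surjective with $h(x,u)=Ax+Bu+k$ and $g(x,u,\theta,\pi)=G_i(x;u;\theta;\pi)+\chi_i$ whenever $B_i(x;u;\theta;\pi)\le\psi_i$ (finitely many $i$), the polytopes $\{B_i(\cdot)\le\psi_i\}$ having disjoint interiors. (A4) Noise sequences $\{\nu_{t_i}\},\{\omega_{\tau_i}\}$ i.i.d. with i.i.d. components, zero mean and known finite variance; $\log p_\nu,\log p_\omega$ expressible using integer linear constraints. (A5) Observability: there exist $T$ and an incentive sequence such that $(x_0,\theta_0)$ can be computed exactly from noiseless measurements on $0\le t\le T$. *)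

theory Defs
  imports "HOL-Analysis.Analysis"
begin

definition vcat :: "real^'a \<Rightarrow> real^'b \<Rightarrow> real^('a + 'b)" where
  "vcat a b = (\<chi> i. case i of Inl j \<Rightarrow> a $ j | Inr j \<Rightarrow> b $ j)"

definition strictly_concave_on :: "'a::real_vector set \<Rightarrow> ('a \<Rightarrow> real) \<Rightarrow> bool" where
  "strictly_concave_on S f \<longleftrightarrow>
     (\<forall>x\<in>S. \<forall>y\<in>S. x \<noteq> y \<longrightarrow> (\<forall>t::real. 0 < t \<and> t < 1 \<longrightarrow>
        (1 - t) * f x + t * f y < f ((1 - t) *\<^sub>R x + t *\<^sub>R y)))"

definition milp_rep :: "'i set \<Rightarrow> ('i \<Rightarrow> real) set \<Rightarrow> bool" where
  "milp_rep I S \<longleftrightarrow> finite I \<and>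
     (\<exists>(nc::nat) (m::nat) (k::nat) (a::nat \<Rightarrow> 'i \<Rightarrow> real) (b::nat \<Rightarrow> nat \<Rightarrow> real)
        (c::nat \<Rightarrow> nat \<Rightarrow> real) (d::nat \<Rightarrow> real).
        S = {z. (\<forall>i. i \<notin> I \<longrightarrow> z i = 0) \<and>
               (\<exists>(y::nat \<Rightarrow> real) (w::nat \<Rightarrow> real). (\<forall>l<k. w l \<in> \<int>) \<and>
                  (\<forall>j<nc. (\<Sum>i\<in>I. a j i * z i) + (\<Sum>l<m. b j l * y l)
                           + (\<Sum>l<k. c j l * w l) \<le> d j))})"

definition milp_set :: "(real^'n) set \<Rightarrow> bool" where
  "milp_set P \<longleftrightarrow> milp_rep UNIV ((\<lambda>v i. v $ i) ` P)"

definition hypo_milp :: "(real^'n \<Rightarrow> real) \<Rightarrow> bool" where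
  "hypo_milp \<phi> \<longleftrightarrow>
     milp_rep UNIV ((\<lambda>(v, r). (\<lambda>i. case i of Some j \<Rightarrow> v $ j | None \<Rightarrow> r)) ` {(v, r). r \<le> \<phi> v})"

definition agent_traj ::
  "nat \<Rightarrow> (real^'x) set \<Rightarrow> (real^'u) set \<Rightarrow> (real^'th) set
   \<Rightarrow> (real^'x \<Rightarrow> real^'u \<Rightarrow> real^'th \<Rightarrow> real^'p \<Rightarrow> real)
   \<Rightarrow> (real^'x \<Rightarrow> real^'u \<Rightarrow> real^'x)
   \<Rightarrow> (real^'x \<Rightarrow> real^'u \<Rightarrow> real^'th \<Rightarrow> real^'p \<Rightarrow> real^'th)
   \<Rightarrow> (nat \<Rightarrow> real^'p) \<Rightarrow> (nat \<Rightarrow> real^'x) \<Rightarrow> (nat \<Rightarrow> real^'th) \<Rightarrow> (nat \<Rightarrow> real^'u) \<Rightarrow> bool"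
  where
  "agent_traj N Xs Us Ths f h g \<pi> X \<Theta> U \<longleftrightarrow>
     (\<forall>t<N. U t \<in> Us \<and>
        (\<forall>v\<in>Us. f (h (X t) v) v (\<Theta> t) (\<pi> t) \<le> f (h (X t) (U t)) (U t) (\<Theta> t) (\<pi> t)) \<and>
        X (Suc t) = h (X t) (U t) \<and>
        \<Theta> (Suc t) = g (X t) (U t) (\<Theta> t) (\<pi> t)) \<and>
     (\<forall>t\<le>N. X t \<in> Xs \<and> \<Theta> t \<in> Ths)"

definition mle_obj ::
  "(real^'ox \<Rightarrow> real) \<Rightarrow> (real^'oy \<Rightarrow> real) \<Rightarrow> real^'x^'ox \<Rightarrow> real^'u^'oy
   \<Rightarrow> (nat \<Rightarrow> real^'ox) \<Rightarrow> (nat \<Rightarrow> real^'oy) \<Rightarrow> nat \<Rightarrow> nat \<Rightarrow> (nat \<Rightarrow> nat) \<Rightarrow> (nat \<Rightarrow> nat)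
   \<Rightarrow> (nat \<Rightarrow> real^'x) \<Rightarrow> (nat \<Rightarrow> real^'u) \<Rightarrow> real" where
  "mle_obj p\<nu> p\<omega> D C xt yt nx nu tx tu X U =
     (\<Sum>i\<le>nx. ln (p\<nu> (xt i - D *v X (tx i)))) + (\<Sum>j\<le>nu. ln (p\<omega> (yt j - C *v U (tu j))))"

text \<open>Encoding of the decision variables (x_0..x_N, \<theta>_0..\<theta>_N, u_0..u_{N-1}) together with
  an epigraph variable r as one real vector with finitely many coordinates.\<close>
definition enc :: "nat \<Rightarrow> (nat \<Rightarrow> real^'x) \<Rightarrow> (nat \<Rightarrow> real^'th) \<Rightarrow> (nat \<Rightarrow> real^'u) \<Rightarrow> real
                   \<Rightarrow> (nat \<times> ('x + 'th + 'u)) option \<Rightarrow> real" where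
  "enc N X \<Theta> U r = (\<lambda>i. case i of
       None \<Rightarrow> r
     | Some (t, Inl j) \<Rightarrow> if t \<le> N then X t $ j else 0
     | Some (t, Inr (Inl j)) \<Rightarrow> if t \<le> N then \<Theta> t $ j else 0
     | Some (t, Inr (Inr j)) \<Rightarrow> if t < N then U t $ j else 0)"

definition enc_idx :: "nat \<Rightarrow> ((nat \<times> ('x::finite + 'th::finite + 'u::finite)) option) set" where
  "enc_idx N = insert None (Some ` (({..N} \<times> range Inl) \<union> ({..N} \<times> range (Inr \<circ> Inl))
                                     \<union> ({..<N} \<times> range (Inr \<circ> Inr))))"

text \<open>Hypograph of the MLE problem: encodings of feasible points together with
  any value r not exceeding the objective.  Maximizing r over this set is the MLE problem.\<close>
definition mle_hypo where
  "mle_hypo N Xs Us Ths f h g \<pi> p\<nu> p\<omega> D C xt yt nx nu tx tu =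
     {enc N X \<Theta> U r | X \<Theta> U r. agent_traj N Xs Us Ths f h g \<pi> X \<Theta> U \<and>
                               r \<le> mle_obj p\<nu> p\<omega> D C xt yt nx nu tx tu X U}"

end

theory Submission
  imports Defs
begin



definition islin :: "'i set \<Rightarrow> 'j set \<Rightarrow> (('i \<Rightarrow> real) \<Rightarrow> ('j \<Rightarrow> real) \<Rightarrow> real) \<Rightarrow> bool" where
  "islin I J lc \<longleftrightarrow> (\<exists>c \<alpha> \<beta>. \<forall>z y. lc z y = c + (\<Sum>i\<in>I. \<alpha> i * z i) + (\<Sum>j\<in>J. \<beta> j * y j))"

lemma islin_const: "islin I J (\<lambda>z y. c)"
  unfolding islin_def by (rule exI[of _ c], rule exI[of _ "\<lambda>_. 0"], rule exI[of _ "\<lambda>_. 0"]) simp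

lemma sum_ind: "finite I \<Longrightarrow> i \<in> I \<Longrightarrow> (\<Sum>ia\<in>I. (if ia = i then 1 else 0) * z ia) = (z i :: real)"
proof -
  assume "finite I" "i \<in> I"
  have "(\<Sum>ia\<in>I. (if ia = i then 1 else 0) * z ia) = (\<Sum>ia\<in>I. if ia = i then z ia else 0)"
    by (intro sum.cong) auto
  also have "\<dots> = z i" using \<open>finite I\<close> \<open>i \<in> I\<close> by simp
  finally show ?thesis .
qed

lemma islin_z: "finite I \<Longrightarrow> i \<in> I \<Longrightarrow> islin I J (\<lambda>z y. z i)"
  unfolding islin_def
  by (rule exI[of _ 0], rule exI[of _ "\<lambda>i'. if i' = i then 1 else 0"], rule exI[of _ "\<lambda>_. 0"])
     (simp add: sum_ind)

lemma islin_y: "finite J \<Longrightarrow> j \<in> J \<Longrightarrow> islin I J (\<lambda>z y. y j)"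
  unfolding islin_def
  by (rule exI[of _ 0], rule exI[of _ "\<lambda>_. 0"], rule exI[of _ "\<lambda>i'. if i' = j then 1 else 0"])
     (simp add: sum_ind)

lemma islin_add: "islin I J f \<Longrightarrow> islin I J g \<Longrightarrow> islin I J (\<lambda>z y. f z y + g z y)"
proof -
  assume "islin I J f" "islin I J g"
  then obtain c1 a1 b1 c2 a2 b2 where
    "\<forall>z y. f z y = c1 + (\<Sum>i\<in>I. a1 i * z i) + (\<Sum>j\<in>J. b1 j * y j)"
    "\<forall>z y. g z y = c2 + (\<Sum>i\<in>I. a2 i * z i) + (\<Sum>j\<in>J. b2 j * y j)"
    unfolding islin_def by blast
  then show ?thesis unfolding islin_def
    by (intro exI[of _ "c1 + c2"] exI[of _ "\<lambda>i. a1 i + a2 i"] exI[of _ "\<lambda>i. b1 i + b2 i"])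
       (simp add: distrib_right sum.distrib)
qed

lemma islin_cmul: "islin I J f \<Longrightarrow> islin I J (\<lambda>z y. c * f z y)"
proof -
  assume "islin I J f"
  then obtain c1 a1 b1 where
    "\<forall>z y. f z y = c1 + (\<Sum>i\<in>I. a1 i * z i) + (\<Sum>j\<in>J. b1 j * y j)"
    unfolding islin_def by blast
  then show ?thesis unfolding islin_def
    by (intro exI[of _ "c * c1"] exI[of _ "\<lambda>i. c * a1 i"] exI[of _ "\<lambda>i. c * b1 i"])
       (simp add: distrib_left sum_distrib_left mult.assoc)
qed

lemma islin_mulc: "islin I J f \<Longrightarrow> islin I J (\<lambda>z y. f z y * c)"
  using islin_cmul[of I J f c] by (simp add: mult.commute)

lemma islin_neg: "islin I J f \<Longrightarrow> islin I J (\<lambda>z y. - f z y)"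
  using islin_cmul[of I J f "-1"] by simp

lemma islin_diff: "islin I J f \<Longrightarrow> islin I J g \<Longrightarrow> islin I J (\<lambda>z y. f z y - g z y)"
  using islin_add[of I J f "\<lambda>z y. - g z y"] islin_neg[of I J g] by simp

lemma islin_sum: "finite S \<Longrightarrow> (\<And>s. s \<in> S \<Longrightarrow> islin I J (f s)) \<Longrightarrow> islin I J (\<lambda>z y. \<Sum>s\<in>S. f s z y)"
proof (induction S rule: finite_induct)
  case empty then show ?case using islin_const[of I J 0] by simp
next
  case (insert x F)
  then have "islin I J (\<lambda>z y. f x z y + (\<Sum>s\<in>F. f s z y))" by (intro islin_add) auto
  then show ?case using insert by simp
qed

lemma islin_mono:
  assumes "islin I J f" "I \<subseteq> I'" "J \<subseteq> J'" "finite I'" "finite J'"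
  shows "islin I' J' f"
proof -
  obtain c a b where f: "\<forall>z y. f z y = c + (\<Sum>i\<in>I. a i * z i) + (\<Sum>j\<in>J. b j * y j)"
    using assms(1) unfolding islin_def by blast
  have "finite I" "finite J" using assms finite_subset by auto
  have 1: "(\<Sum>i\<in>I'. (if i \<in> I then a i else 0) * z i) = (\<Sum>i\<in>I. a i * z i)" for z
  proof -
    have "(\<Sum>i\<in>I'. (if i \<in> I then a i else 0) * z i) = (\<Sum>i\<in>I'. if i \<in> I then a i * z i else 0)"
      by (intro sum.cong) auto
    also have "\<dots> = (\<Sum>i\<in>I' \<inter> I. a i * z i)" using assms(4) by (simp add: sum.inter_restrict)
    also have "I' \<inter> I = I" using assms(2) by auto
    finally show ?thesis .
  qed
  have 2: "(\<Sum>j\<in>J'. (if j \<in> J then b j else 0) * y j) = (\<Sum>j\<in>J. b j * y j)" for y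
  proof -
    have "(\<Sum>j\<in>J'. (if j \<in> J then b j else 0) * y j) = (\<Sum>j\<in>J'. if j \<in> J then b j * y j else 0)"
      by (intro sum.cong) auto
    also have "\<dots> = (\<Sum>j\<in>J' \<inter> J. b j * y j)" using assms(5) by (simp add: sum.inter_restrict)
    also have "J' \<inter> J = J" using assms(3) by auto
    finally show ?thesis .
  qed
  show ?thesis unfolding islin_def
    by (intro exI[of _ c] exI[of _ "\<lambda>i. if i \<in> I then a i else 0"] exI[of _ "\<lambda>j. if j \<in> J then b j else 0"])
       (simp add: 1 2 f)
qed

lemma islin_bound:
  assumes "islin I J f"
  shows "\<exists>M. \<forall>z y. (\<forall>i\<in>I. \<bar>z i\<bar> \<le> B) \<longrightarrow> (\<forall>j\<in>J. \<bar>y j\<bar> \<le> B) \<longrightarrow> \<bar>f z y\<bar> \<le> M"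
proof -
  obtain c a b where f: "\<forall>z y. f z y = c + (\<Sum>i\<in>I. a i * z i) + (\<Sum>j\<in>J. b j * y j)"
    using assms(1) unfolding islin_def by blast
  show ?thesis
  proof (intro exI allI impI)
    fix z y assume z: "\<forall>i\<in>I. \<bar>z i\<bar> \<le> B" and y: "\<forall>j\<in>J. \<bar>y j\<bar> \<le> B"
    have "\<bar>(\<Sum>i\<in>I. a i * z i)\<bar> \<le> (\<Sum>i\<in>I. \<bar>a i\<bar> * B)"
    proof -
      have "\<bar>(\<Sum>i\<in>I. a i * z i)\<bar> \<le> (\<Sum>i\<in>I. \<bar>a i * z i\<bar>)" by (rule sum_abs)
      also have "\<dots> \<le> (\<Sum>i\<in>I. \<bar>a i\<bar> * B)" using z by (intro sum_mono) (auto simp: abs_mult intro: mult_left_mono)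
      finally show ?thesis .
    qed
    moreover have "\<bar>(\<Sum>j\<in>J. b j * y j)\<bar> \<le> (\<Sum>j\<in>J. \<bar>b j\<bar> * B)"
    proof -
      have "\<bar>(\<Sum>j\<in>J. b j * y j)\<bar> \<le> (\<Sum>j\<in>J. \<bar>b j * y j\<bar>)" by (rule sum_abs)
      also have "\<dots> \<le> (\<Sum>j\<in>J. \<bar>b j\<bar> * B)" using y by (intro sum_mono) (auto simp: abs_mult intro: mult_left_mono)
      finally show ?thesis .
    qed
    ultimately show "\<bar>f z y\<bar> \<le> \<bar>c\<bar> + (\<Sum>i\<in>I. \<bar>a i\<bar> * B) + (\<Sum>j\<in>J. \<bar>b j\<bar> * B)"
    proof -
      have "f z y = c + (\<Sum>i\<in>I. a i * z i) + (\<Sum>j\<in>J. b j * y j)" using f by blast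
      then show ?thesis using \<open>\<bar>(\<Sum>i\<in>I. a i * z i)\<bar> \<le> _\<close> \<open>\<bar>(\<Sum>j\<in>J. b j * y j)\<bar> \<le> _\<close> by linarith
    qed
  qed
qed

definition vislin :: "'i set \<Rightarrow> 'j set \<Rightarrow> (('i \<Rightarrow> real) \<Rightarrow> ('j \<Rightarrow> real) \<Rightarrow> real^'n) \<Rightarrow> bool" where
  "vislin I J V \<longleftrightarrow> (\<forall>q. islin I J (\<lambda>z y. V z y $ q))"

lemma islin_comp: "vislin I J V \<Longrightarrow> islin I J (\<lambda>z y. V z y $ q)"
  by (simp add: vislin_def)

lemma vislin_lambda: "(\<And>q. islin I J (\<lambda>z y. g z y q)) \<Longrightarrow> vislin I J (\<lambda>z y. \<chi> q. g z y q)"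
  by (simp add: vislin_def)

lemma vislin_const: "vislin I J (\<lambda>z y. c)"
  by (simp add: vislin_def islin_const)

lemma vislin_add: "vislin I J U \<Longrightarrow> vislin I J V \<Longrightarrow> vislin I J (\<lambda>z y. U z y + V z y)"
  by (simp add: vislin_def islin_add)

lemma vislin_diff: "vislin I J U \<Longrightarrow> vislin I J V \<Longrightarrow> vislin I J (\<lambda>z y. U z y - V z y)"
  by (simp add: vislin_def islin_diff)

lemma vislin_mv: "vislin I J V \<Longrightarrow> vislin I J (\<lambda>z y. M *v V z y)"
  unfolding vislin_def matrix_vector_mult_def
  by (auto intro!: islin_sum islin_cmul)

lemma vislin_scaleR: "islin I J f \<Longrightarrow> vislin I J (\<lambda>z y. f z y *\<^sub>R v)"
  unfolding vislin_def by (auto intro!: islin_mulc)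

lemma vislin_sum: "finite S \<Longrightarrow> (\<And>s. s \<in> S \<Longrightarrow> vislin I J (f s)) \<Longrightarrow> vislin I J (\<lambda>z y. \<Sum>s\<in>S. f s z y)"
  unfolding vislin_def by (auto intro!: islin_sum)

lemma vcat_nth_Inl [simp]: "vcat a b $ Inl j = a $ j" by (simp add: vcat_def)
lemma vcat_nth_Inr [simp]: "vcat a b $ Inr j = b $ j" by (simp add: vcat_def)

lemma vislin_vcat: "vislin I J U \<Longrightarrow> vislin I J V \<Longrightarrow> vislin I J (\<lambda>z y. vcat (U z y) (V z y))"
  unfolding vislin_def
proof
  fix q assume "\<forall>q. islin I J (\<lambda>z y. U z y $ q)" "\<forall>q. islin I J (\<lambda>z y. V z y $ q)"
  then show "islin I J (\<lambda>z y. vcat (U z y) (V z y) $ q)" by (cases q) auto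
qed

lemma islin_inner1: "vislin I J V \<Longrightarrow> islin I J (\<lambda>z y. c \<bullet> V z y)"
  unfolding vislin_def inner_vec_def by (auto intro!: islin_sum islin_cmul)

lemma islin_inner2: "vislin I J V \<Longrightarrow> islin I J (\<lambda>z y. V z y \<bullet> c)"
  unfolding vislin_def inner_vec_def by (auto intro!: islin_sum islin_mulc)

lemma vcat_add: "vcat (a + a') (b + b') = vcat a b + vcat a' b'"
  unfolding vec_eq_iff by (intro allI, case_tac i) auto
lemma vcat_scale: "vcat (c *\<^sub>R a) (c *\<^sub>R b) = c *\<^sub>R vcat a b"
  unfolding vec_eq_iff by (intro allI, case_tac i) auto
lemma vcat_zero: "vcat 0 0 = 0"
  unfolding vec_eq_iff by (intro allI, case_tac i) auto
lemma vcat_inner: "vcat a b \<bullet> vcat c d = a \<bullet> c + b \<bullet> d"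
  unfolding inner_vec_def by (subst UNIV_Plus_UNIV[symmetric], subst sum.Plus) auto

lemma lin_axis:
  fixes L :: "real^'n \<Rightarrow> real" and d :: "real^'n"
  assumes "linear L"
  shows "L d = (\<chi> q. L (axis q (1::real))) \<bullet> d"
proof -
  have e: "(\<Sum>q\<in>UNIV. d $ q *\<^sub>R axis q 1) = d"
    using basis_expansion[of d] unfolding scalar_mult_eq_scaleR .
  have 1: "L d = L (\<Sum>q\<in>UNIV. d $ q *\<^sub>R axis q 1)" by (simp only: e)
  have 2: "L (\<Sum>q\<in>UNIV. d $ q *\<^sub>R axis q 1) = (\<Sum>q\<in>UNIV. L (d $ q *\<^sub>R axis q 1))"
    using linear_sum[OF assms, of "\<lambda>q. d $ q *\<^sub>R axis q 1" UNIV] by (simp only: o_def)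
  have 3: "(\<Sum>q\<in>UNIV. L (d $ q *\<^sub>R axis q 1)) = (\<Sum>q\<in>UNIV. d $ q * L (axis q 1))"
    by (intro sum.cong refl) (simp only: linear_scale[OF assms] real_scaleR_def)
  have 4: "(\<Sum>q\<in>UNIV. d $ q * L (axis q 1)) = (\<chi> q. L (axis q 1)) \<bullet> d"
    unfolding inner_vec_def by (simp only: vec_lambda_beta inner_real_def mult.commute)
  show ?thesis using 1 2 3 4 by simp
qed

lemma poly_fin:
  assumes "polyhedron S"
  shows "\<exists>(n::nat) a b. S = {x. \<forall>l<n. a l \<bullet> x \<le> b l}"
proof -
  obtain F where F: "finite F" "S = \<Inter>F" "\<forall>h\<in>F. \<exists>a b. a \<noteq> 0 \<and> h = {x. a \<bullet> x \<le> b}"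
    using assms unfolding polyhedron_def by blast
  have "\<forall>h\<in>F. \<exists>ab. h = {x. fst ab \<bullet> x \<le> snd ab}"
  proof
    fix h assume "h \<in> F"
    then obtain a b where "h = {x. a \<bullet> x \<le> b}" using F(3) by blast
    then show "\<exists>ab. h = {x. fst ab \<bullet> x \<le> snd ab}" by (intro exI[of _ "(a,b)"]) simp
  qed
  from bchoice[OF this] obtain g where g: "\<forall>h\<in>F. h = {x. fst (g h) \<bullet> x \<le> snd (g h)}" by blast
  obtain e where e: "bij_betw e {..<card F} F"
    using ex_bij_betw_nat_finite[OF F(1)] by (auto simp: atLeast0LessThan)
  have mem: "x \<in> h \<longleftrightarrow> fst (g h) \<bullet> x \<le> snd (g h)" if "h \<in> F" for x h
  proof -
    define a' where "a' = fst (g h)"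
    define b' where "b' = snd (g h)"
    have "h = {x. a' \<bullet> x \<le> b'}" using g that unfolding a'_def b'_def by blast
    then show ?thesis unfolding a'_def[symmetric] b'_def[symmetric] by simp
  qed
  have "S = {x. \<forall>l<card F. fst (g (e l)) \<bullet> x \<le> snd (g (e l))}"
  proof (intro set_eqI iffI)
    fix x assume "x \<in> S"
    then show "x \<in> {x. \<forall>l<card F. fst (g (e l)) \<bullet> x \<le> snd (g (e l))}"
    proof (intro CollectI allI impI)
      fix l assume "l < card F"
      then have el: "e l \<in> F" using e unfolding bij_betw_def by auto
      then have "x \<in> e l" using \<open>x \<in> S\<close> F(2) by auto
      then show "fst (g (e l)) \<bullet> x \<le> snd (g (e l))" using mem[OF el] by simp
    qed
  next
    fix x assume x: "x \<in> {x. \<forall>l<card F. fst (g (e l)) \<bullet> x \<le> snd (g (e l))}"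
    have "x \<in> h" if hF: "h \<in> F" for h
    proof -
      obtain l where l: "l < card F" "e l = h" using e hF unfolding bij_betw_def by (metis imageE lessThan_iff)
      then have "fst (g h) \<bullet> x \<le> snd (g h)" using x by auto
      then show ?thesis using mem[OF hF] by simp
    qed
    then show "x \<in> S" using F(2) by auto
  qed
  then show ?thesis by - (intro exI, assumption)
qed



lemma cvx_hull_img:
  fixes f :: "'j \<Rightarrow> 'a::real_vector"
  assumes "finite A" "x \<in> convex hull (f ` A)"
  shows "\<exists>\<mu>. (\<forall>j\<in>A. 0 \<le> \<mu> j) \<and> sum \<mu> A = 1 \<and> x = (\<Sum>j\<in>A. \<mu> j *\<^sub>R f j)"
proof -
  let ?R = "{y. \<exists>\<mu>. (\<forall>j\<in>A. 0 \<le> \<mu> j) \<and> sum \<mu> A = 1 \<and> y = (\<Sum>j\<in>A. \<mu> j *\<^sub>R f j)}"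
  have "f ` A \<subseteq> ?R"
  proof
    fix y assume "y \<in> f ` A"
    then obtain j where j: "j \<in> A" "y = f j" by auto
    let ?m = "\<lambda>j'. if j' = j then 1 else (0::real)"
    have "sum ?m A = 1" using j assms(1) by (simp add: sum.delta)
    moreover have "(\<Sum>j'\<in>A. ?m j' *\<^sub>R f j') = (\<Sum>j'\<in>A. if j' = j then f j' else 0)"
      by (intro sum.cong) auto
    moreover have "(\<Sum>j'\<in>A. if j' = j then f j' else 0) = f j" using j assms(1) by (simp add: sum.delta)
    ultimately have "(\<forall>j'\<in>A. 0 \<le> ?m j') \<and> sum ?m A = 1 \<and> y = (\<Sum>j'\<in>A. ?m j' *\<^sub>R f j')"
      using j by simp
    then show "y \<in> ?R" unfolding mem_Collect_eq by (rule exI[of _ ?m])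
  qed
  moreover have "convex ?R"
    unfolding convex_def
  proof (intro ballI allI impI)
    fix y1 y2 and u v :: real
    assume "y1 \<in> ?R" "y2 \<in> ?R" and uv: "0 \<le> u" "0 \<le> v" "u + v = 1"
    then obtain m1 m2 where m1: "\<forall>j\<in>A. 0 \<le> m1 j" "sum m1 A = 1" "y1 = (\<Sum>j\<in>A. m1 j *\<^sub>R f j)"
      and m2: "\<forall>j\<in>A. 0 \<le> m2 j" "sum m2 A = 1" "y2 = (\<Sum>j\<in>A. m2 j *\<^sub>R f j)" by auto
    let ?m = "\<lambda>j. u * m1 j + v * m2 j"
    have "sum ?m A = u * sum m1 A + v * sum m2 A" by (simp add: sum.distrib sum_distrib_left)
    then have "sum ?m A = 1" using m1 m2 uv by simp
    moreover have "\<forall>j\<in>A. 0 \<le> ?m j" using m1 m2 uv by simp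
    moreover have "u *\<^sub>R y1 + v *\<^sub>R y2 = (\<Sum>j\<in>A. ?m j *\<^sub>R f j)"
    proof -
      have 1: "u *\<^sub>R y1 = (\<Sum>j\<in>A. (u * m1 j) *\<^sub>R f j)" unfolding m1(3) scaleR_sum_right by simp
      have 2: "v *\<^sub>R y2 = (\<Sum>j\<in>A. (v * m2 j) *\<^sub>R f j)" unfolding m2(3) scaleR_sum_right by simp
      show ?thesis unfolding 1 2 scaleR_add_left sum.distrib ..
    qed
    ultimately show "u *\<^sub>R y1 + v *\<^sub>R y2 \<in> ?R" unfolding mem_Collect_eq by (intro exI[of _ ?m]) simp
  qed
  ultimately have "convex hull (f ` A) \<subseteq> ?R" by (rule hull_minimal)
  then show ?thesis using assms(2) by blast
qed

lemma min_le_comb: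
  fixes g :: "'j \<Rightarrow> real"
  assumes "finite A" "A \<noteq> {}" "\<forall>j\<in>A. 0 \<le> \<mu> j" "sum \<mu> A = 1"
  shows "Min (g ` A) \<le> (\<Sum>j\<in>A. \<mu> j * g j)"
proof -
  have "(\<Sum>j\<in>A. \<mu> j * Min (g ` A)) \<le> (\<Sum>j\<in>A. \<mu> j * g j)"
    using assms by (intro sum_mono mult_left_mono) auto
  moreover have "(\<Sum>j\<in>A. \<mu> j * Min (g ` A)) = Min (g ` A)"
    using assms by (metis mult_1 sum_distrib_right)
  ultimately show ?thesis by simp
qed

lemma ev_small:
  fixes g x :: real
  assumes "0 < g"
  shows "\<forall>\<^sub>F e in at_right 0. e * x < g"
proof -
  have "((\<lambda>e. e * x) \<longlongrightarrow> 0 * x) (at_right 0)"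
    by (intro tendsto_intros)
  then show ?thesis using assms order_tendstoD(2) by fastforce
qed


lemma kkt_suff:
  fixes a :: "nat \<Rightarrow> 'a::euclidean_space" and b :: "nat \<Rightarrow> real" and v0 c v :: 'a
    and Fv :: "nat \<Rightarrow> nat \<Rightarrow> 'a" and aff :: "nat \<Rightarrow> nat \<Rightarrow> 'a \<Rightarrow> real"
    and S qd \<phi> :: "'a \<Rightarrow> real" and J :: "nat \<Rightarrow> nat set" and K nL :: nat
  assumes phi: "\<And>v. \<phi> v = S v + (\<Sum>i<K. Min ((\<lambda>j. aff i j v) ` J i))"
    and J: "\<And>i. i < K \<Longrightarrow> finite (J i) \<and> J i \<noteq> {}"
    and aff: "\<And>i j d. aff i j (v0 + d) = aff i j v0 + Fv i j \<bullet> d"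
    and S: "\<And>d. S (v0 + d) = S v0 + c \<bullet> d - qd d"
    and qpos: "\<And>d. 0 \<le> qd d"
    and P: "\<forall>l\<in>P. a l \<bullet> v0 = b l"
    and mu: "\<forall>i<K. (\<forall>j\<in>J i. 0 \<le> \<mu> i j \<and> (0 < \<mu> i j \<longrightarrow> (\<forall>j'\<in>J i. aff i j v0 \<le> aff i j' v0))) \<and> sum (\<mu> i) (J i) = 1"
    and cone: "c + (\<Sum>i<K. \<Sum>j\<in>J i. \<mu> i j *\<^sub>R Fv i j) \<in> convex_cone hull (a ` P)"
    and v: "\<forall>l\<in>P. a l \<bullet> v \<le> b l"
  shows "\<phi> v \<le> \<phi> v0"
proof -
  define d where "d = v - v0"
  have vd: "v = v0 + d" by (simp add: d_def)
  let ?C = "{x. x \<bullet> d \<le> 0}"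
  have cc: "convex_cone ?C" unfolding convex_cone_iff
    by (auto simp: inner_add_left mult_nonneg_nonpos)
  have "a ` P \<subseteq> ?C" using P v by (auto simp: d_def inner_diff_right)
  then have "convex_cone hull (a ` P) \<subseteq> ?C" using cc by (rule hull_minimal)
  then have cd: "(c + (\<Sum>i<K. \<Sum>j\<in>J i. \<mu> i j *\<^sub>R Fv i j)) \<bullet> d \<le> 0" using cone by auto
  have cd2: "(c + (\<Sum>i<K. \<Sum>j\<in>J i. \<mu> i j *\<^sub>R Fv i j)) \<bullet> d
      = c \<bullet> d + (\<Sum>i<K. \<Sum>j\<in>J i. \<mu> i j * (Fv i j \<bullet> d))"
    by (simp add: inner_add_left inner_sum_left)
  have mi: "Min ((\<lambda>j. aff i j v) ` J i) \<le> Min ((\<lambda>j. aff i j v0) ` J i) + (\<Sum>j\<in>J i. \<mu> i j * (Fv i j \<bullet> d))"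
    if i: "i < K" for i
  proof -
    let ?m = "Min ((\<lambda>j. aff i j v0) ` J i)"
    have Ji: "finite (J i)" "J i \<noteq> {}" using J[OF i] by auto
    have mui: "\<forall>j\<in>J i. 0 \<le> \<mu> i j" "sum (\<mu> i) (J i) = 1" using mu i by auto
    have "Min ((\<lambda>j. aff i j v) ` J i) \<le> (\<Sum>j\<in>J i. \<mu> i j * aff i j v)"
      using min_le_comb[OF Ji mui] by simp
    also have "\<dots> = (\<Sum>j\<in>J i. \<mu> i j * ?m + \<mu> i j * (Fv i j \<bullet> d))"
    proof (rule sum.cong[OF refl])
      fix j assume j: "j \<in> J i"
      have "\<mu> i j * aff i j v0 = \<mu> i j * ?m"
      proof (cases "\<mu> i j = 0")
        case False
        then have "0 < \<mu> i j" using mui j by force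
        then have "\<forall>j'\<in>J i. aff i j v0 \<le> aff i j' v0" using mu i j by blast
        then have "aff i j v0 \<le> ?m" using Ji by (subst Min_ge_iff) auto
        moreover have "?m \<le> aff i j v0" using Ji j by (intro Min_le) auto
        ultimately show ?thesis by simp
      qed simp
      then show "\<mu> i j * aff i j v = \<mu> i j * ?m + \<mu> i j * (Fv i j \<bullet> d)"
        unfolding vd aff by (simp add: distrib_left)
    qed
    also have "\<dots> = (\<Sum>j\<in>J i. \<mu> i j * ?m) + (\<Sum>j\<in>J i. \<mu> i j * (Fv i j \<bullet> d))"
      by (rule sum.distrib)
    also have "(\<Sum>j\<in>J i. \<mu> i j * ?m) = ?m" using mui by (metis mult_1 sum_distrib_right)
    finally show ?thesis .
  qed
  have "(\<Sum>i<K. Min ((\<lambda>j. aff i j v) ` J i)) \<le> (\<Sum>i<K. Min ((\<lambda>j. aff i j v0) ` J i) + (\<Sum>j\<in>J i. \<mu> i j * (Fv i j \<bullet> d)))"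
    using mi by (intro sum_mono) auto
  also have "\<dots> = (\<Sum>i<K. Min ((\<lambda>j. aff i j v0) ` J i)) + (\<Sum>i<K. \<Sum>j\<in>J i. \<mu> i j * (Fv i j \<bullet> d))"
    by (rule sum.distrib)
  finally have sm: "(\<Sum>i<K. Min ((\<lambda>j. aff i j v) ` J i)) \<le> (\<Sum>i<K. Min ((\<lambda>j. aff i j v0) ` J i)) + (\<Sum>i<K. \<Sum>j\<in>J i. \<mu> i j * (Fv i j \<bullet> d))" .
  have "S v = S v0 + c \<bullet> d - qd d" unfolding vd by (rule S)
  then show ?thesis using sm cd cd2 qpos[of d] phi[of v] phi[of v0] by linarith
qed


primrec Tset :: "(nat \<Rightarrow> nat \<Rightarrow> 'a::real_vector) \<Rightarrow> (nat \<Rightarrow> nat set) \<Rightarrow> nat \<Rightarrow> 'a set" where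
  "Tset Fv A 0 = {0}"
| "Tset Fv A (Suc i) = (\<Union>x\<in>Tset Fv A i. \<Union>y\<in>convex hull (Fv i ` A i). {x + y})"

lemma Tset_cc:
  fixes Fv :: "nat \<Rightarrow> nat \<Rightarrow> 'a::euclidean_space"
  assumes "\<forall>i<n. finite (A i)"
  shows "compact (Tset Fv A n) \<and> convex (Tset Fv A n)"
  using assms
proof (induction n)
  case 0 then show ?case by simp
next
  case (Suc n)
  then have IH: "compact (Tset Fv A n)" "convex (Tset Fv A n)" by auto
  have "finite (A n)" using Suc.prems by auto
  then have h: "compact (convex hull (Fv n ` A n))" "convex (convex hull (Fv n ` A n))"
    by (auto intro: finite_imp_compact_convex_hull)
  show ?case using compact_sums'[OF IH(1) h(1)] convex_sums[OF IH(2) h(2)] by simp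
qed

lemma Tset_rep:
  assumes "\<forall>i<n. finite (A i)" "x \<in> Tset Fv A n"
  shows "\<exists>\<mu>. (\<forall>i<n. (\<forall>j\<in>A i. 0 \<le> \<mu> i j) \<and> sum (\<mu> i) (A i) = 1) \<and>
           x = (\<Sum>i<n. \<Sum>j\<in>A i. \<mu> i j *\<^sub>R Fv i j)"
  using assms
proof (induction n arbitrary: x)
  case 0 then show ?case by simp
next
  case (Suc n)
  from Suc.prems(2) obtain x' y where xy: "x' \<in> Tset Fv A n" "y \<in> convex hull (Fv n ` A n)" "x = x' + y"
    by auto
  from Suc.IH[OF _ xy(1)] Suc.prems(1) obtain \<mu> where mu:
    "\<forall>i<n. (\<forall>j\<in>A i. 0 \<le> \<mu> i j) \<and> sum (\<mu> i) (A i) = 1" "x' = (\<Sum>i<n. \<Sum>j\<in>A i. \<mu> i j *\<^sub>R Fv i j)"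
    by auto
  from cvx_hull_img[OF _ xy(2)] Suc.prems(1) obtain \<nu> where nu:
    "\<forall>j\<in>A n. 0 \<le> \<nu> j" "sum \<nu> (A n) = 1" "y = (\<Sum>j\<in>A n. \<nu> j *\<^sub>R Fv n j)" by auto
  define \<mu>' where "\<mu>' i = (if i = n then \<nu> else \<mu> i)" for i
  have "(\<Sum>i<Suc n. \<Sum>j\<in>A i. \<mu>' i j *\<^sub>R Fv i j) = (\<Sum>i<n. \<Sum>j\<in>A i. \<mu>' i j *\<^sub>R Fv i j) + (\<Sum>j\<in>A n. \<mu>' n j *\<^sub>R Fv n j)"
    by simp
  also have "(\<Sum>i<n. \<Sum>j\<in>A i. \<mu>' i j *\<^sub>R Fv i j) = x'" unfolding mu(2) by (intro sum.cong) (auto simp: \<mu>'_def)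
  also have "(\<Sum>j\<in>A n. \<mu>' n j *\<^sub>R Fv n j) = y" by (simp add: nu(3) \<mu>'_def)
  finally have "x = (\<Sum>i<Suc n. \<Sum>j\<in>A i. \<mu>' i j *\<^sub>R Fv i j)" using xy(3) by simp
  moreover have "\<forall>i<Suc n. (\<forall>j\<in>A i. 0 \<le> \<mu>' i j) \<and> sum (\<mu>' i) (A i) = 1"
    using mu(1) nu(1,2) by (auto simp: \<mu>'_def less_Suc_eq)
  ultimately show ?case by (intro exI[of _ \<mu>']) simp
qed

lemma Tset_sel:
  assumes "\<forall>i<n. sel i \<in> A i"
  shows "(\<Sum>i<n. Fv i (sel i)) \<in> Tset Fv A n"
  using assms
proof (induction n)
  case 0 then show ?case by simp
next
  case (Suc n)
  then have "(\<Sum>i<n. Fv i (sel i)) \<in> Tset Fv A n" by auto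
  moreover have "Fv n (sel n) \<in> convex hull (Fv n ` A n)" using Suc.prems by (intro hull_inc) auto
  ultimately show ?case by force
qed


lemma kkt_nec:
  fixes a :: "nat \<Rightarrow> 'a::euclidean_space" and b :: "nat \<Rightarrow> real" and v0 c :: 'a
    and Fv :: "nat \<Rightarrow> nat \<Rightarrow> 'a" and aff :: "nat \<Rightarrow> nat \<Rightarrow> 'a \<Rightarrow> real"
    and S qd \<phi> :: "'a \<Rightarrow> real" and J :: "nat \<Rightarrow> nat set" and K nL :: nat
  assumes v0: "\<forall>l<nL. a l \<bullet> v0 \<le> b l"
    and phi: "\<And>v. \<phi> v = S v + (\<Sum>i<K. Min ((\<lambda>j. aff i j v) ` J i))"
    and J: "\<And>i. i < K \<Longrightarrow> finite (J i) \<and> J i \<noteq> {}"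
    and aff: "\<And>i j d. aff i j (v0 + d) = aff i j v0 + Fv i j \<bullet> d"
    and S: "\<And>d. S (v0 + d) = S v0 + c \<bullet> d - qd d"
    and qhom: "\<And>e d. qd (e *\<^sub>R d) = e^2 * qd d"
    and opt: "\<forall>v. (\<forall>l<nL. a l \<bullet> v \<le> b l) \<longrightarrow> \<phi> v \<le> \<phi> v0"
  shows "\<exists>P \<mu>. P \<subseteq> {..<nL} \<and> (\<forall>l\<in>P. a l \<bullet> v0 = b l) \<and>
       (\<forall>i<K. (\<forall>j\<in>J i. 0 \<le> \<mu> i j \<and> (0 < \<mu> i j \<longrightarrow> (\<forall>j'\<in>J i. aff i j v0 \<le> aff i j' v0))) \<and> sum (\<mu> i) (J i) = 1) \<and>
       c + (\<Sum>i<K. \<Sum>j\<in>J i. \<mu> i j *\<^sub>R Fv i j) \<in> convex_cone hull (a ` P)"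
proof (rule ccontr)
  assume neg: "\<not> ?thesis"
  define P where "P = {l. l < nL \<and> a l \<bullet> v0 = b l}"
  define m where "m i = Min ((\<lambda>j. aff i j v0) ` J i)" for i
  define A where "A i = {j \<in> J i. \<forall>j'\<in>J i. aff i j v0 \<le> aff i j' v0}" for i
  have AJ: "A i \<subseteq> J i" for i by (auto simp: A_def)
  have Afin: "\<forall>i<K. finite (A i)" using J AJ by (meson finite_subset)
  have Am: "aff i j v0 = m i" if "i < K" "j \<in> A i" for i j
  proof -
    have Ji: "finite (J i)" "J i \<noteq> {}" using J[OF that(1)] by auto
    have "aff i j v0 \<le> m i" unfolding m_def using Ji that(2) by (subst Min_ge_iff) (auto simp: A_def)
    moreover have "m i \<le> aff i j v0" unfolding m_def using Ji that(2) AJ by (intro Min_le) auto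
    ultimately show ?thesis by simp
  qed
  have Ane: "\<exists>j. j \<in> A i" if "i < K" for i
  proof -
    have Ji: "finite (J i)" "J i \<noteq> {}" using J[OF that] by auto
    have "m i \<in> (\<lambda>j. aff i j v0) ` J i" unfolding m_def using Ji by (intro Min_in) auto
    then obtain j where j: "j \<in> J i" "aff i j v0 = m i" by auto
    have "\<forall>j'\<in>J i. m i \<le> aff i j' v0" unfolding m_def using Ji by auto
    then show ?thesis using j by (auto simp: A_def)
  qed
  have nAm: "m i < aff i j v0" if hh: "i < K" "j \<in> J i" "j \<notin> A i" for i j
  proof -
    have Ji: "finite (J i)" "J i \<noteq> {}" using J[OF hh(1)] by auto
    obtain j' where "j' \<in> J i" "aff i j' v0 < aff i j v0" using hh(2,3) by (auto simp: A_def not_le)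
    moreover have "m i \<le> aff i j' v0" unfolding m_def using Ji \<open>j' \<in> J i\<close> by (intro Min_le) auto
    ultimately show ?thesis by simp
  qed
  define K0 where "K0 = convex_cone hull (a ` P)"
  define T where "T = Tset Fv A K"
  define D where "D = (\<Union>k\<in>K0. \<Union>t\<in>T. {k - t})"
  have finP: "finite P" by (auto simp: P_def)
  have K0c: "closed K0" unfolding K0_def
    by (rule polyhedron_imp_closed, rule polyhedron_convex_cone_hull) (use finP in auto)
  have K0v: "convex K0" by (simp add: K0_def convex_convex_cone_hull)
  have Tcc: "compact T" "convex T" using Tset_cc[OF Afin] by (auto simp: T_def)
  have Dc: "closed D" unfolding D_def by (rule closed_compact_differences[OF K0c Tcc(1)])
  have Dv: "convex D" unfolding D_def by (rule convex_differences[OF K0v Tcc(2)])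
  have cD: "c \<notin> D"
  proof
    assume "c \<in> D"
    then obtain k t where kt: "k \<in> K0" "t \<in> T" "c = k - t" by (auto simp: D_def)
    from Tset_rep[OF Afin, of t Fv] kt(2) obtain \<mu> where mu:
      "\<forall>i<K. (\<forall>j\<in>A i. 0 \<le> \<mu> i j) \<and> sum (\<mu> i) (A i) = 1" "t = (\<Sum>i<K. \<Sum>j\<in>A i. \<mu> i j *\<^sub>R Fv i j)"
      by (auto simp: T_def)
    define \<mu>' where "\<mu>' i j = (if j \<in> A i then \<mu> i j else 0)" for i j
    have s1: "sum (\<mu>' i) (J i) = sum (\<mu> i) (A i)" if "i < K" for i
    proof -
      have "sum (\<mu>' i) (J i) = sum (\<mu> i) (J i \<inter> A i)" unfolding \<mu>'_def
        using J[OF that] by (simp add: sum.inter_restrict)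
      also have "J i \<inter> A i = A i" using AJ by auto
      finally show ?thesis .
    qed
    have s2: "(\<Sum>j\<in>J i. \<mu>' i j *\<^sub>R Fv i j) = (\<Sum>j\<in>A i. \<mu> i j *\<^sub>R Fv i j)" if "i < K" for i
    proof -
      have "(\<Sum>j\<in>J i. \<mu>' i j *\<^sub>R Fv i j) = (\<Sum>j\<in>J i. if j \<in> A i then \<mu> i j *\<^sub>R Fv i j else 0)"
        unfolding \<mu>'_def by (intro sum.cong) auto
      also have "\<dots> = (\<Sum>j\<in>J i \<inter> A i. \<mu> i j *\<^sub>R Fv i j)"
        using J[OF that] by (simp add: sum.inter_restrict)
      also have "J i \<inter> A i = A i" using AJ by auto
      finally show ?thesis .
    qed
    have "c + (\<Sum>i<K. \<Sum>j\<in>J i. \<mu>' i j *\<^sub>R Fv i j) = c + t" unfolding mu(2) using s2 by simp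
    also have "\<dots> = k" using kt by simp
    finally have "c + (\<Sum>i<K. \<Sum>j\<in>J i. \<mu>' i j *\<^sub>R Fv i j) \<in> convex_cone hull (a ` P)"
      using kt(1) by (simp add: K0_def)
    moreover have "P \<subseteq> {..<nL} \<and> (\<forall>l\<in>P. a l \<bullet> v0 = b l)" by (auto simp: P_def)
    moreover have "\<forall>i<K. (\<forall>j\<in>J i. 0 \<le> \<mu>' i j \<and> (0 < \<mu>' i j \<longrightarrow> (\<forall>j'\<in>J i. aff i j v0 \<le> aff i j' v0))) \<and> sum (\<mu>' i) (J i) = 1"
      using mu(1) s1 by (auto simp: \<mu>'_def A_def)
    ultimately show False using neg by blast
  qed
  obtain a0 b0 where ab: "a0 \<bullet> c < b0" "\<forall>x\<in>D. b0 < a0 \<bullet> x"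
    using separating_hyperplane_closed_point[OF Dv Dc cD] by blast
  define d where "d = - a0"
  have "\<forall>i. \<exists>j. i < K \<longrightarrow> j \<in> A i \<and> (\<forall>j'\<in>A i. Fv i j \<bullet> d \<le> Fv i j' \<bullet> d)"
  proof
    fix i show "\<exists>j. i < K \<longrightarrow> j \<in> A i \<and> (\<forall>j'\<in>A i. Fv i j \<bullet> d \<le> Fv i j' \<bullet> d)"
    proof (cases "i < K")
      case True
      have fA: "finite (A i)" "A i \<noteq> {}" using Afin Ane True by auto
      have "Min ((\<lambda>j. Fv i j \<bullet> d) ` A i) \<in> (\<lambda>j. Fv i j \<bullet> d) ` A i" using fA by (intro Min_in) auto
      then obtain j where j: "j \<in> A i" "Fv i j \<bullet> d = Min ((\<lambda>j. Fv i j \<bullet> d) ` A i)" by auto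
      have "\<forall>j'\<in>A i. Fv i j \<bullet> d \<le> Fv i j' \<bullet> d" unfolding j(2) using fA by auto
      then show ?thesis using j by blast
    qed simp
  qed
  then obtain sel where sel: "\<And>i. i < K \<Longrightarrow> sel i \<in> A i \<and> (\<forall>j'\<in>A i. Fv i (sel i) \<bullet> d \<le> Fv i j' \<bullet> d)"
    by metis
  define t0 where "t0 = (\<Sum>i<K. Fv i (sel i))"
  have t0T: "t0 \<in> T" unfolding t0_def T_def using sel by (intro Tset_sel) auto
  have zK: "0 \<in> K0" by (simp add: K0_def convex_cone_hull_contains_0)
  have cone_nonneg: "0 \<le> a0 \<bullet> g" if g: "g \<in> K0" for g
  proof (rule ccontr)
    assume "\<not> 0 \<le> a0 \<bullet> g"
    then have ng: "a0 \<bullet> g < 0" by simp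
    define lam where "lam = (\<bar>a0 \<bullet> t0\<bar> + \<bar>b0\<bar> + 1) / (- (a0 \<bullet> g))"
    have lam0: "0 \<le> lam" unfolding lam_def using ng by (intro divide_nonneg_pos) auto
    have "lam *\<^sub>R g \<in> K0" using g lam0 conic_convex_cone_hull unfolding K0_def conic_def by blast
    then have "lam *\<^sub>R g - t0 \<in> D" using t0T by (auto simp: D_def)
    then have "b0 < a0 \<bullet> (lam *\<^sub>R g - t0)" using ab(2) by blast
    then have "b0 < lam * (a0 \<bullet> g) - a0 \<bullet> t0" by (simp add: inner_diff_right)
    moreover have "lam * (a0 \<bullet> g) = - (\<bar>a0 \<bullet> t0\<bar> + \<bar>b0\<bar> + 1)" using ng by (simp add: lam_def)
    ultimately show False by linarith
  qed
  have ad: "a l \<bullet> d \<le> 0" if "l \<in> P" for l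
  proof -
    have "a l \<in> K0" unfolding K0_def using that by (intro hull_inc) auto
    then have "0 \<le> a0 \<bullet> a l" by (rule cone_nonneg)
    then show ?thesis by (simp add: d_def inner_commute)
  qed
  define \<gamma> where "\<gamma> = c \<bullet> d + (\<Sum>i<K. Fv i (sel i) \<bullet> d)"
  have gpos: "0 < \<gamma>"
  proof -
    have "0 - t0 \<in> D" unfolding D_def using zK t0T by blast
    then have "b0 < a0 \<bullet> (0 - t0)" using ab(2) by blast
    then have "b0 < - (a0 \<bullet> t0)" by simp
    then have "a0 \<bullet> (c + t0) < 0" using ab(1) by (simp add: inner_add_right)
    moreover have "\<gamma> = - (a0 \<bullet> (c + t0))" by (simp add: \<gamma>_def d_def t0_def inner_sum_right inner_sum_left inner_add_right inner_commute sum_negf)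
    ultimately show ?thesis by simp
  qed
  have E1: "\<forall>\<^sub>F e in at_right 0. \<forall>l\<in>{..<nL} - P. e * (a l \<bullet> d) < b l - a l \<bullet> v0"
  proof (rule eventually_ball_finite)
    show "\<forall>l\<in>{..<nL} - P. \<forall>\<^sub>F e in at_right 0. e * (a l \<bullet> d) < b l - a l \<bullet> v0"
    proof
      fix l assume "l \<in> {..<nL} - P"
      then have "0 < b l - a l \<bullet> v0" using v0 by (auto simp: P_def)
      then show "\<forall>\<^sub>F e in at_right 0. e * (a l \<bullet> d) < b l - a l \<bullet> v0" by (rule ev_small)
    qed
  qed simp
  have E2: "\<forall>\<^sub>F e in at_right 0. \<forall>i\<in>{..<K}. \<forall>j\<in>J i - A i.
      e * (\<bar>Fv i j \<bullet> d\<bar> + \<bar>Fv i (sel i) \<bullet> d\<bar>) < aff i j v0 - m i"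
  proof (rule eventually_ball_finite)
    show "\<forall>i\<in>{..<K}. \<forall>\<^sub>F e in at_right 0. \<forall>j\<in>J i - A i.
      e * (\<bar>Fv i j \<bullet> d\<bar> + \<bar>Fv i (sel i) \<bullet> d\<bar>) < aff i j v0 - m i"
    proof
      fix i assume i: "i \<in> {..<K}"
      show "\<forall>\<^sub>F e in at_right 0. \<forall>j\<in>J i - A i. e * (\<bar>Fv i j \<bullet> d\<bar> + \<bar>Fv i (sel i) \<bullet> d\<bar>) < aff i j v0 - m i"
      proof (rule eventually_ball_finite)
        show "finite (J i - A i)" using J i by auto
        show "\<forall>j\<in>J i - A i. \<forall>\<^sub>F e in at_right 0. e * (\<bar>Fv i j \<bullet> d\<bar> + \<bar>Fv i (sel i) \<bullet> d\<bar>) < aff i j v0 - m i"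
        proof
          fix j assume "j \<in> J i - A i"
          then have "0 < aff i j v0 - m i" using nAm i by auto
          then show "\<forall>\<^sub>F e in at_right 0. e * (\<bar>Fv i j \<bullet> d\<bar> + \<bar>Fv i (sel i) \<bullet> d\<bar>) < aff i j v0 - m i"
            by (rule ev_small)
        qed
      qed
    qed
  qed simp
  have E3: "\<forall>\<^sub>F e in at_right 0. e * qd d < \<gamma>" using gpos by (rule ev_small)
  have "\<forall>\<^sub>F e in at_right 0. (\<forall>l\<in>{..<nL} - P. e * (a l \<bullet> d) < b l - a l \<bullet> v0) \<and>
      (\<forall>i\<in>{..<K}. \<forall>j\<in>J i - A i. e * (\<bar>Fv i j \<bullet> d\<bar> + \<bar>Fv i (sel i) \<bullet> d\<bar>) < aff i j v0 - m i) \<and>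
      e * qd d < \<gamma>"
    using E1 E2 E3 by (auto intro: eventually_conj)
  then obtain bb where bb: "0 < bb" and bbP: "\<And>y. 0 < y \<Longrightarrow> y < bb \<Longrightarrow>
      (\<forall>l\<in>{..<nL} - P. y * (a l \<bullet> d) < b l - a l \<bullet> v0) \<and>
      (\<forall>i\<in>{..<K}. \<forall>j\<in>J i - A i. y * (\<bar>Fv i j \<bullet> d\<bar> + \<bar>Fv i (sel i) \<bullet> d\<bar>) < aff i j v0 - m i) \<and>
      y * qd d < \<gamma>"
    unfolding eventually_at_right_field by auto
  define e where "e = bb / 2"
  have e0: "0 < e" using bb by (simp add: e_def)
  have eP: "(\<forall>l\<in>{..<nL} - P. e * (a l \<bullet> d) < b l - a l \<bullet> v0) \<and>
      (\<forall>i\<in>{..<K}. \<forall>j\<in>J i - A i. e * (\<bar>Fv i j \<bullet> d\<bar> + \<bar>Fv i (sel i) \<bullet> d\<bar>) < aff i j v0 - m i) \<and>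
      e * qd d < \<gamma>"
    using bbP[of e] bb by (simp add: e_def)
  define v where "v = v0 + e *\<^sub>R d"
  have feas: "\<forall>l<nL. a l \<bullet> v \<le> b l"
  proof (intro allI impI)
    fix l assume l: "l < nL"
    show "a l \<bullet> v \<le> b l"
    proof (cases "l \<in> P")
      case True
      then have "e * (a l \<bullet> d) \<le> 0" using ad e0 by (simp add: mult_nonneg_nonpos)
      then show ?thesis using True by (simp add: v_def inner_add_right P_def)
    next
      case False
      then show ?thesis using eP l by (force simp: v_def inner_add_right)
    qed
  qed
  have mins: "m i + e * (Fv i (sel i) \<bullet> d) \<le> Min ((\<lambda>j. aff i j v) ` J i)" if i: "i < K" for i
  proof -
    have Ji: "finite (J i)" "J i \<noteq> {}" using J[OF i] by auto
    have "\<forall>j\<in>J i. m i + e * (Fv i (sel i) \<bullet> d) \<le> aff i j v"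
    proof
      fix j assume j: "j \<in> J i"
      have av: "aff i j v = aff i j v0 + e * (Fv i j \<bullet> d)" by (simp add: v_def aff)
      show "m i + e * (Fv i (sel i) \<bullet> d) \<le> aff i j v"
      proof (cases "j \<in> A i")
        case True
        then have "Fv i (sel i) \<bullet> d \<le> Fv i j \<bullet> d" using sel[OF i] by blast
        then have "e * (Fv i (sel i) \<bullet> d) \<le> e * (Fv i j \<bullet> d)" using e0 by (simp add: mult_left_mono)
        then show ?thesis using Am[OF i True] av by simp
      next
        case False
        then have g: "e * (\<bar>Fv i j \<bullet> d\<bar> + \<bar>Fv i (sel i) \<bullet> d\<bar>) < aff i j v0 - m i" using eP i j by blast
        have "- (e * \<bar>Fv i j \<bullet> d\<bar>) \<le> e * (Fv i j \<bullet> d)" using e0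
          by (metis abs_ge_minus_self minus_le_iff mult_left_mono mult_minus_right order_less_imp_le)
        moreover have "e * (Fv i (sel i) \<bullet> d) \<le> e * \<bar>Fv i (sel i) \<bullet> d\<bar>" using e0 by (simp add: mult_left_mono)
        ultimately show ?thesis using g av by (simp add: distrib_left)
      qed
    qed
    then show ?thesis using Ji by (subst Min_ge_iff) auto
  qed
  have "(\<Sum>i<K. m i + e * (Fv i (sel i) \<bullet> d)) \<le> (\<Sum>i<K. Min ((\<lambda>j. aff i j v) ` J i))"
    using mins by (intro sum_mono) auto
  moreover have "(\<Sum>i<K. m i + e * (Fv i (sel i) \<bullet> d)) = (\<Sum>i<K. m i) + e * (\<Sum>i<K. Fv i (sel i) \<bullet> d)"
    by (simp add: sum.distrib sum_distrib_left)
  moreover have "S v = S v0 + e * (c \<bullet> d) - e^2 * qd d" by (simp add: v_def S qhom)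
  moreover have "\<phi> v0 = S v0 + (\<Sum>i<K. m i)" by (simp add: phi m_def)
  moreover have "0 < e * (\<gamma> - e * qd d)" using e0 eP by simp
  moreover have "e * (\<gamma> - e * qd d) = e * (c \<bullet> d) + e * (\<Sum>i<K. Fv i (sel i) \<bullet> d) - e^2 * qd d"
    by (simp add: \<gamma>_def algebra_simps power2_eq_square)
  ultimately have "\<phi> v0 < \<phi> v" using phi[of v] by linarith
  then show False using opt feas by force
qed


definition Wd :: "real^'u^'x \<Rightarrow> real^'u \<Rightarrow> real^('x + 'u)" where
  "Wd B d = vcat (B *v d) d"

definition cvec :: "real^('x + 'u)^('x + 'u) \<Rightarrow> real^('x + 'u)^('th + 'p) \<Rightarrow> real^'u^'x
    \<Rightarrow> real^'x \<Rightarrow> real^'u \<Rightarrow> real^'th \<Rightarrow> real^'p \<Rightarrow> real^'u" where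
  "cvec Q H B xn v th p = (\<chi> q. - (Wd B (axis q 1) \<bullet> (Q *v vcat xn v) + vcat xn v \<bullet> (Q *v Wd B (axis q 1)))
       + vcat th p \<bullet> (H *v Wd B (axis q 1)))"

definition Fvec :: "real^('x::finite + ('u::finite + ('th::finite + 'p::finite))) \<Rightarrow> real^'u^'x \<Rightarrow> real^'u" where
  "Fvec F B = (\<chi> q. F \<bullet> vcat (B *v axis q 1) (vcat (axis q 1) 0))"

lemma Wd_add: "Wd B (x + y) = Wd B x + Wd B y"
  by (simp add: Wd_def matrix_vector_right_distrib vcat_add)
lemma Wd_scale: "Wd B (c *\<^sub>R x) = c *\<^sub>R Wd B x"
  by (simp add: Wd_def matrix_vector_mult_scaleR vcat_scale)

lemma kkt_app:
  fixes f :: "real^'x \<Rightarrow> real^'u \<Rightarrow> real^'th \<Rightarrow> real^'p \<Rightarrow> real"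
    and h :: "real^'x \<Rightarrow> real^'u \<Rightarrow> real^'x"
    and Q :: "real^('x + 'u)^('x + 'u)" and H :: "real^('x + 'u)^('th + 'p)"
    and K :: nat and J :: "nat \<Rightarrow> nat set"
    and F :: "nat \<Rightarrow> nat \<Rightarrow> real^('x + ('u + ('th + 'p)))" and \<zeta> :: "nat \<Rightarrow> nat \<Rightarrow> real"
    and A :: "real^'x^'x" and B :: "real^'u^'x" and k :: "real^'x"
    and aU :: "nat \<Rightarrow> real^'u" and bU :: "nat \<Rightarrow> real"
  assumes A2_form: "\<And>x u \<theta> p. f x u \<theta> p =
        - (vcat x u \<bullet> (Q *v vcat x u)) + vcat \<theta> p \<bullet> (H *v vcat x u)
        + (\<Sum>i<K. Min ((\<lambda>j. F i j \<bullet> vcat x (vcat u (vcat \<theta> p)) + \<zeta> i j) ` J i))"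
    and A2_J: "\<And>i. i < K \<Longrightarrow> finite (J i) \<and> J i \<noteq> {}"
    and A2_Q: "\<And>z. 0 \<le> z \<bullet> (Q *v z)"
    and A3_h: "\<And>x u. h x u = A *v x + B *v u + k"
    and Us: "Us = {v. \<forall>l<nL. aU l \<bullet> v \<le> bU l}"
    and v0: "v0 \<in> Us"
  shows "(\<forall>v\<in>Us. f (h x v) v \<theta> p \<le> f (h x v0) v0 \<theta> p) \<longleftrightarrow>
    (\<exists>P \<mu>. P \<subseteq> {..<nL} \<and> (\<forall>l\<in>P. aU l \<bullet> v0 = bU l) \<and>
       (\<forall>i<K. (\<forall>j\<in>J i. 0 \<le> \<mu> i j \<and> (0 < \<mu> i j \<longrightarrow>
            (\<forall>j'\<in>J i. F i j \<bullet> vcat (h x v0) (vcat v0 (vcat \<theta> p)) + \<zeta> i j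
                     \<le> F i j' \<bullet> vcat (h x v0) (vcat v0 (vcat \<theta> p)) + \<zeta> i j'))) \<and> sum (\<mu> i) (J i) = 1) \<and>
       cvec Q H B (h x v0) v0 \<theta> p + (\<Sum>i<K. \<Sum>j\<in>J i. \<mu> i j *\<^sub>R Fvec (F i j) B) \<in> convex_cone hull (aU ` P))"
proof -
  define \<phi> where "\<phi> v = f (h x v) v \<theta> p" for v
  define S where "S v = - (vcat (h x v) v \<bullet> (Q *v vcat (h x v) v)) + vcat \<theta> p \<bullet> (H *v vcat (h x v) v)" for v
  define aff where "aff i j v = F i j \<bullet> vcat (h x v) (vcat v (vcat \<theta> p)) + \<zeta> i j" for i j v
  define qd where "qd d = Wd B d \<bullet> (Q *v Wd B d)" for d
  define w0 where "w0 = vcat (h x v0) v0"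
  define lin where "lin d = - (Wd B d \<bullet> (Q *v w0) + w0 \<bullet> (Q *v Wd B d)) + vcat \<theta> p \<bullet> (H *v Wd B d)" for d
  have phi: "\<And>v. \<phi> v = S v + (\<Sum>i<K. Min ((\<lambda>j. aff i j v) ` J i))"
    unfolding \<phi>_def S_def aff_def by (rule A2_form)
  have hv: "h x (v0 + d) = h x v0 + B *v d" for d
    by (simp add: A3_h matrix_vector_right_distrib algebra_simps)
  have linF: "linear (\<lambda>d. F i j \<bullet> vcat (B *v d) (vcat d 0))" for i j
  proof (rule linearI)
    fix d1 d2 :: "real^'u"
    have "vcat (B *v (d1 + d2)) (vcat (d1 + d2) (0::real^('th+'p))) = vcat (B *v d1) (vcat d1 0) + vcat (B *v d2) (vcat d2 0)"
      by (metis add.right_neutral matrix_vector_right_distrib vcat_add)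
    then show "F i j \<bullet> vcat (B *v (d1 + d2)) (vcat (d1 + d2) 0) = F i j \<bullet> vcat (B *v d1) (vcat d1 0) + F i j \<bullet> vcat (B *v d2) (vcat d2 0)"
      by (simp add: inner_add_right)
  next
    fix c :: real and d :: "real^'u"
    have "vcat (B *v (c *\<^sub>R d)) (vcat (c *\<^sub>R d) (0::real^('th+'p))) = c *\<^sub>R vcat (B *v d) (vcat d 0)"
      by (metis matrix_vector_mult_scaleR scaleR_zero_right vcat_scale)
    then show "F i j \<bullet> vcat (B *v (c *\<^sub>R d)) (vcat (c *\<^sub>R d) 0) = c *\<^sub>R (F i j \<bullet> vcat (B *v d) (vcat d 0))"
      by simp
  qed
  have aff: "aff i j (v0 + d) = aff i j v0 + Fvec (F i j) B \<bullet> d" for i j d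
  proof -
    have "vcat (h x (v0 + d)) (vcat (v0 + d) (vcat \<theta> p)) = vcat (h x v0) (vcat v0 (vcat \<theta> p)) + vcat (B *v d) (vcat d 0)"
      unfolding hv by (metis add.right_neutral vcat_add)
    then have "aff i j (v0 + d) = aff i j v0 + F i j \<bullet> vcat (B *v d) (vcat d 0)"
      by (simp add: aff_def inner_add_right)
    moreover have "F i j \<bullet> vcat (B *v d) (vcat d 0) = Fvec (F i j) B \<bullet> d"
      unfolding Fvec_def using lin_axis[OF linF[of i j], of d] by simp
    ultimately show ?thesis by simp
  qed
  have linl: "linear lin"
  proof (rule linearI)
    fix d1 d2 :: "real^'u"
    show "lin (d1 + d2) = lin d1 + lin d2"
      by (simp add: lin_def Wd_add matrix_vector_right_distrib inner_add_left inner_add_right)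
  next
    fix c :: real and d :: "real^'u"
    show "lin (c *\<^sub>R d) = c *\<^sub>R lin d"
      by (simp add: lin_def Wd_scale matrix_vector_mult_scaleR algebra_simps)
  qed
  have cv: "cvec Q H B (h x v0) v0 \<theta> p = (\<chi> q. lin (axis q 1))"
    by (simp add: cvec_def lin_def w0_def)
  have S: "S (v0 + d) = S v0 + cvec Q H B (h x v0) v0 \<theta> p \<bullet> d - qd d" for d
  proof -
    have w: "vcat (h x (v0 + d)) (v0 + d) = w0 + Wd B d"
      unfolding hv w0_def Wd_def by (rule vcat_add)
    have "S (v0 + d) = - ((w0 + Wd B d) \<bullet> (Q *v (w0 + Wd B d))) + vcat \<theta> p \<bullet> (H *v (w0 + Wd B d))"
      unfolding S_def w ..
    also have "\<dots> = S v0 + lin d - qd d"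
      by (simp add: S_def lin_def qd_def w0_def[symmetric] matrix_vector_right_distrib inner_add_left inner_add_right)
    also have "lin d = cvec Q H B (h x v0) v0 \<theta> p \<bullet> d" unfolding cv by (rule lin_axis[OF linl])
    finally show ?thesis .
  qed
  have qpos: "0 \<le> qd d" for d unfolding qd_def by (rule A2_Q)
  have qhom: "qd (e *\<^sub>R d) = e^2 * qd d" for e d
    by (simp add: qd_def Wd_scale matrix_vector_mult_scaleR power2_eq_square)
  have opt_iff: "(\<forall>v\<in>Us. f (h x v) v \<theta> p \<le> f (h x v0) v0 \<theta> p) \<longleftrightarrow>
      (\<forall>v. (\<forall>l<nL. aU l \<bullet> v \<le> bU l) \<longrightarrow> \<phi> v \<le> \<phi> v0)"
    by (simp add: Us \<phi>_def)
  have v0c: "\<forall>l<nL. aU l \<bullet> v0 \<le> bU l" using v0 Us by simp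
  show ?thesis (is "_ \<longleftrightarrow> ?R") unfolding opt_iff
  proof
    assume "\<forall>v. (\<forall>l<nL. aU l \<bullet> v \<le> bU l) \<longrightarrow> \<phi> v \<le> \<phi> v0"
    from kkt_nec[OF v0c phi A2_J aff S qhom this] show ?R
      unfolding aff_def by blast
  next
    assume ?R
    then obtain P \<mu> where P: "P \<subseteq> {..<nL}" "\<forall>l\<in>P. aU l \<bullet> v0 = bU l"
      and mu: "\<forall>i<K. (\<forall>j\<in>J i. 0 \<le> \<mu> i j \<and> (0 < \<mu> i j \<longrightarrow> (\<forall>j'\<in>J i. aff i j v0 \<le> aff i j' v0))) \<and> sum (\<mu> i) (J i) = 1"
      and cone: "cvec Q H B (h x v0) v0 \<theta> p + (\<Sum>i<K. \<Sum>j\<in>J i. \<mu> i j *\<^sub>R Fvec (F i j) B) \<in> convex_cone hull (aU ` P)"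
      unfolding aff_def by blast
    show "\<forall>v. (\<forall>l<nL. aU l \<bullet> v \<le> bU l) \<longrightarrow> \<phi> v \<le> \<phi> v0"
    proof (intro allI impI)
      fix v assume "\<forall>l<nL. aU l \<bullet> v \<le> bU l"
      then have "\<forall>l\<in>P. aU l \<bullet> v \<le> bU l" using P(1) by auto
      from kkt_suff[OF phi A2_J aff S qpos P(2) mu cone this] show "\<phi> v \<le> \<phi> v0" .
    qed
  qed
qed


lemma islin_case_option:
  "islin I J f \<Longrightarrow> (\<And>o'. islin I J (g o')) \<Longrightarrow> islin I J (\<lambda>z y. case io of None \<Rightarrow> f z y | Some o' \<Rightarrow> g o' z y)"
  by (cases io) auto

lemma vislin_cvec:
  assumes "vislin I J Xn" "vislin I J V" "vislin I J Th"
  shows "vislin I J (\<lambda>z y. cvec Q H B (Xn z y) (V z y) (Th z y) p)"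
  unfolding cvec_def
  by (intro vislin_lambda islin_add islin_neg islin_inner1 islin_inner2 vislin_mv vislin_vcat assms vislin_const)

lemma hypo_unpack:
  fixes \<phi> :: "real^'n \<Rightarrow> real"
  assumes "hypo_milp \<phi>"
  shows "\<exists>(nc::nat) (m::nat) (k::nat) (a::nat \<Rightarrow> 'n option \<Rightarrow> real) (b::nat \<Rightarrow> nat \<Rightarrow> real) (c::nat \<Rightarrow> nat \<Rightarrow> real) (d::nat \<Rightarrow> real).
     \<forall>v r. (r \<le> \<phi> v) \<longleftrightarrow> (\<exists>yy ww. (\<forall>l<k. ww l \<in> \<int>) \<and>
        (\<forall>j<nc. (\<Sum>io\<in>UNIV. a j io * (case io of Some jj \<Rightarrow> v $ jj | None \<Rightarrow> r))
                + (\<Sum>l<m. b j l * yy l) + (\<Sum>l<k. c j l * ww l) \<le> d j))"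
proof -
  let ?e = "\<lambda>(v::real^'n, r::real). case_option r (($) v)"
  obtain nc m k a b c d where H: "?e ` {(v, r). r \<le> \<phi> v} =
     {z. (\<forall>i. i \<notin> (UNIV::'n option set) \<longrightarrow> z i = 0) \<and>
               (\<exists>(y::nat \<Rightarrow> real) (w::nat \<Rightarrow> real). (\<forall>l<k. w l \<in> \<int>) \<and>
                  (\<forall>j<(nc::nat). (\<Sum>i\<in>UNIV. a j i * z i) + (\<Sum>l<(m::nat). b j l * y l)
                           + (\<Sum>l<k. c j l * w l) \<le> d j))}"
    using assms unfolding hypo_milp_def milp_rep_def by (elim conjE exE) (rule that, assumption)
  have inj: "v = v' \<and> r = r'" if "?e (v, r) = ?e (v', r')" for v r v' r'
  proof -
    have "?e (v, r) None = ?e (v', r') None" using that by simp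
    then have "r = r'" by simp
    moreover have "v $ j = v' $ j" for j
    proof -
      have "?e (v, r) (Some j) = ?e (v', r') (Some j)" using that by simp
      then show ?thesis by simp
    qed
    ultimately show ?thesis by (simp add: vec_eq_iff)
  qed
  have "(r \<le> \<phi> v) \<longleftrightarrow> ?e (v, r) \<in> ?e ` {(v, r). r \<le> \<phi> v}" for v r
  proof
    assume "r \<le> \<phi> v" then show "?e (v, r) \<in> ?e ` {(v, r). r \<le> \<phi> v}" by blast
  next
    assume "?e (v, r) \<in> ?e ` {(v, r). r \<le> \<phi> v}"
    then obtain v' r' where "r' \<le> \<phi> v'" "?e (v, r) = ?e (v', r')" by auto
    then show "r \<le> \<phi> v" using inj by blast
  qed
  then have "\<forall>v r. (r \<le> \<phi> v) \<longleftrightarrow> (\<exists>yy ww. (\<forall>l<k. ww l \<in> \<int>) \<and>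
        (\<forall>j<nc. (\<Sum>io\<in>UNIV. a j io * (case io of Some jj \<Rightarrow> v $ jj | None \<Rightarrow> r))
                + (\<Sum>l<m. b j l * yy l) + (\<Sum>l<k. c j l * ww l) \<le> d j))"
    unfolding H by simp
  then show ?thesis by (intro exI)
qed

definition zX :: "((nat \<times> ('x::finite + 'th::finite + 'u::finite)) option \<Rightarrow> real) \<Rightarrow> nat \<Rightarrow> real^'x" where
  "zX z t = (\<chi> j. z (Some (t, Inl j)))"
definition zT :: "((nat \<times> ('x::finite + 'th::finite + 'u::finite)) option \<Rightarrow> real) \<Rightarrow> nat \<Rightarrow> real^'th" where
  "zT z t = (\<chi> j. z (Some (t, Inr (Inl j))))"
definition zU :: "((nat \<times> ('x::finite + 'th::finite + 'u::finite)) option \<Rightarrow> real) \<Rightarrow> nat \<Rightarrow> real^'u" where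
  "zU z t = (\<chi> j. z (Some (t, Inr (Inr j))))"

lemma enc_idx_simps [simp]:
  "None \<in> enc_idx N"
  "Some (t, Inl j) \<in> enc_idx N \<longleftrightarrow> t \<le> N"
  "Some (t, Inr (Inl j')) \<in> enc_idx N \<longleftrightarrow> t \<le> N"
  "Some (t, Inr (Inr j'')) \<in> enc_idx N \<longleftrightarrow> t < N"
  by (auto simp: enc_idx_def)

lemma finite_enc_idx: "finite (enc_idx N)"
proof -
  have "finite ({..N} \<times> range Inl \<union> {..N} \<times> range (Inr \<circ> Inl) \<union> {..<N} \<times> range (Inr \<circ> Inr)
          :: (nat \<times> ('x::finite + 'th::finite + 'u::finite)) set)"
    by (intro finite_UnI finite_cartesian_product) auto
  then show ?thesis unfolding enc_idx_def by simp
qed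

lemma enc_zero: "i \<notin> enc_idx N \<Longrightarrow> enc N X \<Theta> U r i = 0"
  by (auto simp: enc_def enc_idx_def split: option.splits sum.splits)

lemma zX_enc: "t \<le> N \<Longrightarrow> zX (enc N X \<Theta> U r) t = X t"
  by (simp add: zX_def enc_def vec_eq_iff)
lemma zT_enc: "t \<le> N \<Longrightarrow> zT (enc N X \<Theta> U r) t = \<Theta> t"
  by (simp add: zT_def enc_def vec_eq_iff)
lemma zU_enc: "t < N \<Longrightarrow> zU (enc N X \<Theta> U r) t = U t"
  by (simp add: zU_def enc_def vec_eq_iff)
lemma none_enc: "enc N X \<Theta> U r None = r"
  by (simp add: enc_def)

lemma enc_recon:
  assumes "\<forall>i. i \<notin> enc_idx N \<longrightarrow> z i = 0"
  shows "z = enc N (zX z) (zT z) (zU z) (z None)"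
proof
  fix i show "z i = enc N (zX z) (zT z) (zU z) (z None) i"
  proof (cases "i \<in> enc_idx N")
    case True then show ?thesis
      by (auto simp: enc_def enc_idx_def zX_def zT_def zU_def split: option.splits sum.splits)
  next
    case False then show ?thesis using assms enc_zero by metis
  qed
qed

lemma vislin_zX: "finite I \<Longrightarrow> (\<And>j. Some (t, Inl j) \<in> I) \<Longrightarrow> vislin I J (\<lambda>z y. zX z t)"
  unfolding zX_def by (intro vislin_lambda islin_z)
lemma vislin_zT: "finite I \<Longrightarrow> (\<And>j. Some (t, Inr (Inl j)) \<in> I) \<Longrightarrow> vislin I J (\<lambda>z y. zT z t)"
  unfolding zT_def by (intro vislin_lambda islin_z)
lemma vislin_zU: "finite I \<Longrightarrow> (\<And>j. Some (t, Inr (Inr j)) \<in> I) \<Longrightarrow> vislin I J (\<lambda>z y. zU z t)"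
  unfolding zU_def by (intro vislin_lambda islin_z)

lemma int01: "(x::real) \<in> \<int> \<Longrightarrow> 0 \<le> x \<Longrightarrow> x \<le> 1 \<Longrightarrow> x = 0 \<or> x = 1"
  by (metis Ints_cases of_int_0_le_iff of_int_le_1_iff le_less of_int_0 of_int_1 zero_less_one_class.zero_le_one
        antisym int_one_le_iff_zero_less not_le)

lemma sum01:
  fixes y :: "'a \<Rightarrow> real"
  assumes "finite S" "\<forall>s\<in>S. y s = 0 \<or> y s = 1" "sum y S = 1"
  shows "\<exists>s\<in>S. y s = 1"
proof (rule ccontr)
  assume "\<not> ?thesis"
  then have "\<forall>s\<in>S. y s = 0" using assms(2) by auto
  then have "sum y S = 0" by simp
  then show False using assms(3) by simp
qed

definition MB :: "'i set \<Rightarrow> 'j set \<Rightarrow> real \<Rightarrow> (('i \<Rightarrow> real) \<Rightarrow> ('j \<Rightarrow> real) \<Rightarrow> real) \<Rightarrow> real" where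
  "MB I J B E = (SOME M. \<forall>z y. (\<forall>i\<in>I. \<bar>z i\<bar> \<le> B) \<longrightarrow> (\<forall>j\<in>J. \<bar>y j\<bar> \<le> B) \<longrightarrow> \<bar>E z y\<bar> \<le> M)"

lemma MB_bound:
  assumes "islin I J E" "\<forall>i\<in>I. \<bar>z i\<bar> \<le> B" "\<forall>j\<in>J. \<bar>y j\<bar> \<le> B"
  shows "\<bar>E z y\<bar> \<le> MB I J B E"
proof -
  have "\<exists>M. \<forall>z y. (\<forall>i\<in>I. \<bar>z i\<bar> \<le> B) \<longrightarrow> (\<forall>j\<in>J. \<bar>y j\<bar> \<le> B) \<longrightarrow> \<bar>E z y\<bar> \<le> M"
    by (rule islin_bound[OF assms(1)])
  from someI_ex[OF this] show ?thesis using assms(2,3) unfolding MB_def by blast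
qed


lemmas lin_intros = islin_add islin_diff islin_neg islin_cmul islin_mulc islin_sum islin_inner1 islin_inner2
  islin_comp islin_case_option islin_z islin_y islin_const vislin_lambda vislin_add vislin_diff vislin_mv
  vislin_vcat vislin_sum vislin_scaleR vislin_cvec vislin_zX vislin_zT vislin_zU vislin_const


lemma ball_img: "\<forall>x\<in>f ` S. P x \<Longrightarrow> s \<in> S \<Longrightarrow> P (f s)" by auto

lemma two_sided: "(\<forall>s\<in>{1::real,-1}. s * x \<le> 0) \<Longrightarrow> x = 0" by auto

lemma master:
  fixes Cs :: "(('i \<Rightarrow> real) \<Rightarrow> ('j \<Rightarrow> real) \<Rightarrow> real) set"
  assumes fI: "finite I" and fJ: "finite J" and KJ: "Kn \<subseteq> J" and fC: "finite Cs"
    and lin: "\<forall>lc\<in>Cs. islin I J lc"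
  shows "milp_rep I {z. (\<forall>i. i \<notin> I \<longrightarrow> z i = 0) \<and> (\<exists>y. (\<forall>j\<in>Kn. y j \<in> \<int>) \<and> (\<forall>lc\<in>Cs. lc z y \<le> 0))}"
proof -
  obtain C A B where CAB: "\<forall>lc\<in>Cs. \<forall>z y. lc z y = C lc + (\<Sum>i\<in>I. A lc i * z i) + (\<Sum>j\<in>J. B lc j * y j)"
    using lin unfolding islin_def by metis
  have fK: "finite Kn" using fJ KJ finite_subset by blast
  have fJK: "finite (J - Kn)" using fJ by auto
  obtain e1 where e1: "bij_betw e1 {..<card (J - Kn)} (J - Kn)"
    using ex_bij_betw_nat_finite[OF fJK] by (auto simp: atLeast0LessThan)
  obtain e2 where e2: "bij_betw e2 {..<card Kn} Kn"
    using ex_bij_betw_nat_finite[OF fK] by (auto simp: atLeast0LessThan)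
  obtain ec where ec: "bij_betw ec {..<card Cs} Cs"
    using ex_bij_betw_nat_finite[OF fC] by (auto simp: atLeast0LessThan)
  define m where "m = card (J - Kn)"
  define k where "k = card Kn"
  define nc where "nc = card Cs"
  define a where "a jc i = A (ec jc) i" for jc i
  define b where "b jc l = B (ec jc) (e1 l)" for jc l
  define c where "c jc l = B (ec jc) (e2 l)" for jc l
  define d where "d jc = - C (ec jc)" for jc
  have split: "(\<Sum>j\<in>J. B lc j * y j) = (\<Sum>l<m. B lc (e1 l) * y (e1 l)) + (\<Sum>l<k. B lc (e2 l) * y (e2 l))"
    for lc y
  proof -
    have "(\<Sum>j\<in>J. B lc j * y j) = (\<Sum>j\<in>J - Kn. B lc j * y j) + (\<Sum>j\<in>Kn. B lc j * y j)"
      using KJ fJ by (rule sum.subset_diff)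
    also have "(\<Sum>j\<in>J - Kn. B lc j * y j) = (\<Sum>l<m. B lc (e1 l) * y (e1 l))"
      unfolding m_def using sum.reindex_bij_betw[OF e1, of "\<lambda>j. B lc j * y j"] by simp
    also have "(\<Sum>j\<in>Kn. B lc j * y j) = (\<Sum>l<k. B lc (e2 l) * y (e2 l))"
      unfolding k_def using sum.reindex_bij_betw[OF e2, of "\<lambda>j. B lc j * y j"] by simp
    finally show ?thesis .
  qed
  let ?S = "{z. (\<forall>i. i \<notin> I \<longrightarrow> z i = 0) \<and> (\<exists>y. (\<forall>j\<in>Kn. y j \<in> \<int>) \<and> (\<forall>lc\<in>Cs. lc z y \<le> 0))}"
  let ?M = "{z. (\<forall>i. i \<notin> I \<longrightarrow> z i = 0) \<and>
               (\<exists>(y::nat \<Rightarrow> real) (w::nat \<Rightarrow> real). (\<forall>l<k. w l \<in> \<int>) \<and>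
                  (\<forall>j<nc. (\<Sum>i\<in>I. a j i * z i) + (\<Sum>l<m. b j l * y l)
                           + (\<Sum>l<k. c j l * w l) \<le> d j))}"
  have "?S = ?M"
  proof (intro set_eqI iffI)
    fix z assume "z \<in> ?S"
    then obtain y where z0: "\<forall>i. i \<notin> I \<longrightarrow> z i = 0" and yi: "\<forall>j\<in>Kn. y j \<in> \<int>"
      and yc: "\<forall>lc\<in>Cs. lc z y \<le> 0" by blast
    have "(\<forall>l<k. y (e2 l) \<in> \<int>) \<and>
          (\<forall>j<nc. (\<Sum>i\<in>I. a j i * z i) + (\<Sum>l<m. b j l * y (e1 l))
                   + (\<Sum>l<k. c j l * y (e2 l)) \<le> d j)"
    proof (intro conjI allI impI)
      fix l assume "l < k"
      then have "e2 l \<in> Kn" using e2 by (auto simp: k_def bij_betw_def)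
      then show "y (e2 l) \<in> \<int>" using yi by blast
    next
      fix j assume "j < nc"
      then have ecj: "ec j \<in> Cs" using ec by (auto simp: nc_def bij_betw_def)
      have "ec j z y \<le> 0" using yc ecj by blast
      then show "(\<Sum>i\<in>I. a j i * z i) + (\<Sum>l<m. b j l * y (e1 l)) + (\<Sum>l<k. c j l * y (e2 l)) \<le> d j"
      proof -
        have "ec j z y = C (ec j) + (\<Sum>i\<in>I. A (ec j) i * z i) + (\<Sum>jj\<in>J. B (ec j) jj * y jj)"
          using CAB ecj by blast
        then show ?thesis using \<open>ec j z y \<le> 0\<close> split[of "ec j" y] by (simp add: a_def b_def c_def d_def)
      qed
    qed
    then show "z \<in> ?M" using z0 unfolding mem_Collect_eq
      by (intro conjI exI[of _ "\<lambda>l. y (e1 l)"] exI[of _ "\<lambda>l. y (e2 l)"]) auto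
  next
    fix z assume "z \<in> ?M"
    then obtain yy ww where z0: "\<forall>i. i \<notin> I \<longrightarrow> z i = 0" and wi: "\<forall>l<k. ww l \<in> \<int>"
      and cs: "\<forall>j<nc. (\<Sum>i\<in>I. a j i * z i) + (\<Sum>l<m. b j l * yy l) + (\<Sum>l<k. c j l * ww l) \<le> d j"
      by blast
    define y where "y j = (if j \<in> Kn then ww (inv_into {..<k} e2 j) else yy (inv_into {..<m} e1 j))" for j
    have y1: "y (e1 l) = yy l" if "l < m" for l
    proof -
      have "e1 l \<in> J - Kn" using e1 that by (auto simp: m_def bij_betw_def)
      moreover have "inv_into {..<m} e1 (e1 l) = l" using e1 that
        by (auto simp: m_def bij_betw_def inv_into_f_f)
      ultimately show ?thesis by (simp add: y_def)
    qed
    have y2: "y (e2 l) = ww l" if "l < k" for l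
    proof -
      have "e2 l \<in> Kn" using e2 that by (auto simp: k_def bij_betw_def)
      moreover have "inv_into {..<k} e2 (e2 l) = l" using e2 that
        by (auto simp: k_def bij_betw_def inv_into_f_f)
      ultimately show ?thesis by (simp add: y_def)
    qed
    have "\<forall>j\<in>Kn. y j \<in> \<int>"
    proof
      fix j assume j: "j \<in> Kn"
      then have "inv_into {..<k} e2 j \<in> {..<k}" using e2 unfolding k_def bij_betw_def
        by (metis inv_into_into)
      then have "inv_into {..<k} e2 j < k" by simp
      then show "y j \<in> \<int>" using wi j by (simp add: y_def)
    qed
    moreover have "\<forall>lc\<in>Cs. lc z y \<le> 0"
    proof
      fix lc assume l: "lc \<in> Cs"
      then obtain j where j: "j < nc" "ec j = lc" using ec unfolding nc_def bij_betw_def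
        by (metis imageE lessThan_iff)
      have "(\<Sum>l<m. b j l * yy l) = (\<Sum>l<m. B lc (e1 l) * y (e1 l))"
        using y1 j by (intro sum.cong) (auto simp: b_def)
      moreover have "(\<Sum>l<k. c j l * ww l) = (\<Sum>l<k. B lc (e2 l) * y (e2 l))"
        using y2 j by (intro sum.cong) (auto simp: c_def)
      moreover have "lc z y = C lc + (\<Sum>i\<in>I. A lc i * z i) + (\<Sum>j\<in>J. B lc j * y j)"
        using CAB l by blast
      moreover have "(\<Sum>i\<in>I. a j i * z i) = (\<Sum>i\<in>I. A lc i * z i)" using j by (simp add: a_def)
      moreover have "(\<Sum>i\<in>I. a j i * z i) + (\<Sum>l<m. b j l * yy l) + (\<Sum>l<k. c j l * ww l) \<le> d j"
        using cs j by blast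
      ultimately show "lc z y \<le> 0" using j split[of lc y] by (simp add: d_def)
    qed
    ultimately show "z \<in> ?S" using z0 by blast
  qed
  then show ?thesis unfolding milp_rep_def using fI by blast
qed




datatype av = Ny nat nat | Nw nat nat | Nr nat | Oy nat nat | Ow nat nat | Or nat
  | Dl nat nat | Pz nat "nat set" | Ta nat nat nat | Mu nat nat nat

theorem corollary1:
  fixes Xs :: "(real^'x) set" and Us :: "(real^'u) set"
    and Ths :: "(real^'th) set" and Ps :: "(real^'p) set"
    and f :: "real^'x \<Rightarrow> real^'u \<Rightarrow> real^'th \<Rightarrow> real^'p \<Rightarrow> real"
    and h :: "real^'x \<Rightarrow> real^'u \<Rightarrow> real^'x"
    and g :: "real^'x \<Rightarrow> real^'u \<Rightarrow> real^'th \<Rightarrow> real^'p \<Rightarrow> real^'th"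
    and Q :: "real^('x + 'u)^('x + 'u)" and H :: "real^('x + 'u)^('th + 'p)"
    and K :: nat and J :: "nat \<Rightarrow> nat set"
    and F :: "nat \<Rightarrow> nat \<Rightarrow> real^('x + ('u + ('th + 'p)))" and \<zeta> :: "nat \<Rightarrow> nat \<Rightarrow> real"
    and A :: "real^'x^'x" and B :: "real^'u^'x" and k :: "real^'x"
    and Ng :: nat and G :: "nat \<Rightarrow> real^('x + ('u + ('th + 'p)))^'th" and chi :: "nat \<Rightarrow> real^'th"
    and mB :: "nat \<Rightarrow> nat" and Bm :: "nat \<Rightarrow> nat \<Rightarrow> real^('x + ('u + ('th + 'p)))"
    and \<psi> :: "nat \<Rightarrow> nat \<Rightarrow> real"
    and D :: "real^'x^'ox" and C :: "real^'u^'oy"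
    and p\<nu> :: "real^'ox \<Rightarrow> real" and p\<omega> :: "real^'oy \<Rightarrow> real"
    and q\<nu> :: "real \<Rightarrow> real" and q\<omega> :: "real \<Rightarrow> real"
    and N :: nat and \<pi> :: "nat \<Rightarrow> real^'p"
    and nx :: nat and nu :: nat and tx :: "nat \<Rightarrow> nat" and tu :: "nat \<Rightarrow> nat"
    and xt :: "nat \<Rightarrow> real^'ox" and yt :: "nat \<Rightarrow> real^'oy"
  assumes
    \<comment> \<open>(A1)\<close>
    A1_X: "polyhedron Xs" "bounded Xs"
    and A1_U: "polyhedron Us" "bounded Us"
    and A1_Th: "polyhedron Ths" "bounded Ths"
    and A1_P: "bounded Ps" "milp_set Ps"
    \<comment> \<open>(A2)\<close>
    and A2_form: "\<And>x u \<theta> p. f x u \<theta> p =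
        - (vcat x u \<bullet> (Q *v vcat x u)) + vcat \<theta> p \<bullet> (H *v vcat x u)
        + (\<Sum>i<K. Min ((\<lambda>j. F i j \<bullet> vcat x (vcat u (vcat \<theta> p)) + \<zeta> i j) ` J i))"
    and A2_J: "\<And>i. i < K \<Longrightarrow> finite (J i) \<and> J i \<noteq> {}"
    and A2_Q: "\<And>z. 0 \<le> z \<bullet> (Q *v z)"
    and A2_cx: "\<And>u \<theta> p. u \<in> Us \<Longrightarrow> \<theta> \<in> Ths \<Longrightarrow> p \<in> Ps \<Longrightarrow> concave_on Xs (\<lambda>x. f x u \<theta> p)"
    and A2_cu: "\<And>x \<theta> p. x \<in> Xs \<Longrightarrow> \<theta> \<in> Ths \<Longrightarrow> p \<in> Ps \<Longrightarrow> strictly_concave_on Us (\<lambda>u. f x u \<theta> p)"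
    and A2_cth: "\<And>x u p. x \<in> Xs \<Longrightarrow> u \<in> Us \<Longrightarrow> p \<in> Ps \<Longrightarrow> concave_on Ths (\<lambda>\<theta>. f x u \<theta> p)"
    \<comment> \<open>(A3)\<close>
    and A3_h: "\<And>x u. h x u = A *v x + B *v u + k"
    and A3_hsurj: "\<forall>x'\<in>Xs. \<exists>x\<in>Xs. \<exists>u\<in>Us. h x u = x'"
    and A3_g: "\<And>i x u \<theta> p. i < Ng \<Longrightarrow>
        (\<forall>r<mB i. Bm i r \<bullet> vcat x (vcat u (vcat \<theta> p)) \<le> \<psi> i r) \<Longrightarrow>
        g x u \<theta> p = G i *v vcat x (vcat u (vcat \<theta> p)) + chi i"
    and A3_bdd: "\<And>i. i < Ng \<Longrightarrow> bounded {w. \<forall>r<mB i. Bm i r \<bullet> w \<le> \<psi> i r}"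
    and A3_disj: "\<And>i j. i < Ng \<Longrightarrow> j < Ng \<Longrightarrow> i \<noteq> j \<Longrightarrow>
        interior {w. \<forall>r<mB i. Bm i r \<bullet> w \<le> \<psi> i r} \<inter> interior {w. \<forall>r<mB j. Bm j r \<bullet> w \<le> \<psi> j r} = {}"
    and A3_cover: "\<And>x u \<theta> p. x \<in> Xs \<Longrightarrow> u \<in> Us \<Longrightarrow> \<theta> \<in> Ths \<Longrightarrow> p \<in> Ps \<Longrightarrow>
        \<exists>i<Ng. \<forall>r<mB i. Bm i r \<bullet> vcat x (vcat u (vcat \<theta> p)) \<le> \<psi> i r"
    and A3_gsurj: "\<forall>\<theta>'\<in>Ths. \<exists>x\<in>Xs. \<exists>u\<in>Us. \<exists>\<theta>\<in>Ths. \<exists>p\<in>Ps. g x u \<theta> p = \<theta>'"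
    \<comment> \<open>(A4)\<close>
    and A4_nu: "\<And>v. p\<nu> v = (\<Prod>i\<in>UNIV. q\<nu> (v $ i))" "\<And>s. 0 \<le> q\<nu> s"
        "(q\<nu> has_integral 1) UNIV" "((\<lambda>s. s * q\<nu> s) has_integral 0) UNIV"
        "(\<lambda>s. s\<^sup>2 * q\<nu> s) integrable_on UNIV"
    and A4_om: "\<And>v. p\<omega> v = (\<Prod>i\<in>UNIV. q\<omega> (v $ i))" "\<And>s. 0 \<le> q\<omega> s"
        "(q\<omega> has_integral 1) UNIV" "((\<lambda>s. s * q\<omega> s) has_integral 0) UNIV"
        "(\<lambda>s. s\<^sup>2 * q\<omega> s) integrable_on UNIV"
    and A4_log: "hypo_milp (\<lambda>v. ln (p\<nu> v))" "hypo_milp (\<lambda>v. ln (p\<omega> v))"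
    \<comment> \<open>(A5)\<close>
    and A5: "\<exists>T \<pi>s. (\<forall>t. \<pi>s t \<in> Ps) \<and>
        (\<forall>X \<Theta> U X' \<Theta>' U'.
           agent_traj T Xs Us Ths f h g \<pi>s X \<Theta> U \<and> agent_traj T Xs Us Ths f h g \<pi>s X' \<Theta>' U' \<and>
           (\<forall>t\<le>T. D *v X t = D *v X' t) \<and> (\<forall>t<T. C *v U t = C *v U' t)
           \<longrightarrow> X 0 = X' 0 \<and> \<Theta> 0 = \<Theta>' 0)"
    \<comment> \<open>problem data: given incentives and measurement times within the horizon\<close>
    and inc: "\<And>t. t < N \<Longrightarrow> \<pi> t \<in> Ps"
    and times_x: "\<And>i. i \<le> nx \<Longrightarrow> tx i \<le> N"
    and times_u: "\<And>j. j \<le> nu \<Longrightarrow> tu j < N"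
  shows "milp_rep (enc_idx N) (mle_hypo N Xs Us Ths f h g \<pi> p\<nu> p\<omega> D C xt yt nx nu tx tu)"

proof -
  define I where "I = (enc_idx N :: ((nat \<times> ('x + 'th + 'u)) option) set)"
  have fI: "finite I" unfolding I_def by (rule finite_enc_idx)
  obtain nX aX bX where Xs_eq: "Xs = {x. \<forall>l<(nX::nat). aX l \<bullet> x \<le> bX l}"
    using poly_fin[OF A1_X(1)] by (elim exE) (erule that)
  obtain nT aT bT where Ths_eq: "Ths = {x. \<forall>l<(nT::nat). aT l \<bullet> x \<le> bT l}"
    using poly_fin[OF A1_Th(1)] by (elim exE) (erule that)
  obtain nL aU bU where Us_eq: "Us = {x. \<forall>l<(nL::nat). aU l \<bullet> x \<le> bU l}"
    using poly_fin[OF A1_U(1)] by (elim exE) (erule that)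
  have "\<forall>P\<in>Pow {..<nL}. \<exists>tt::nat \<times> (nat \<Rightarrow> real^'u) \<times> (nat \<Rightarrow> real).
      convex_cone hull (aU ` P) = {x. \<forall>r<fst tt. fst (snd tt) r \<bullet> x \<le> snd (snd tt) r}"
  proof
    fix P assume "P \<in> Pow {..<nL}"
    then have "finite (aU ` P)" by (auto intro: finite_subset)
    then obtain n a b where "convex_cone hull (aU ` P) = {x. \<forall>l<(n::nat). a l \<bullet> x \<le> b l}"
      using poly_fin[OF polyhedron_convex_cone_hull[OF \<open>finite (aU ` P)\<close>]] by (elim exE) (erule that)
    then show "\<exists>tt::nat \<times> (nat \<Rightarrow> real^'u) \<times> (nat \<Rightarrow> real).
      convex_cone hull (aU ` P) = {x. \<forall>r<fst tt. fst (snd tt) r \<bullet> x \<le> snd (snd tt) r}"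
      by (intro exI[of _ "(n, a, b)"]) simp
  qed
  from bchoice[OF this] obtain gc :: "nat set \<Rightarrow> nat \<times> (nat \<Rightarrow> real^'u) \<times> (nat \<Rightarrow> real)" where gc: "\<forall>P\<in>Pow {..<nL}.
      convex_cone hull (aU ` P) = {x. \<forall>r<fst (gc P). fst (snd (gc P)) r \<bullet> x \<le> snd (snd (gc P)) r}"
    by (elim exE) (erule that)
  define nH where "nH P = fst (gc P)" for P
  define hH where "hH P = fst (snd (gc P))" for P
  define eH where "eH P = snd (snd (gc P))" for P
  have cone_eq: "\<And>P. P \<subseteq> {..<nL} \<Longrightarrow> convex_cone hull (aU ` P) = {x. \<forall>r<nH P. hH P r \<bullet> x \<le> eH P r}"
    using gc unfolding nH_def hH_def eH_def by blast
  obtain ncn mn kn an bn cn dn where Hn: "\<forall>v r. (r \<le> ln (p\<nu> v)) \<longleftrightarrow> (\<exists>yy ww. (\<forall>l<(kn::nat). ww l \<in> \<int>) \<and>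
        (\<forall>j<(ncn::nat). (\<Sum>io\<in>UNIV. an j io * (case io of Some jj \<Rightarrow> v $ jj | None \<Rightarrow> r))
                + (\<Sum>l<(mn::nat). bn j l * yy l) + (\<Sum>l<kn. cn j l * ww l) \<le> dn j))"
    using hypo_unpack[OF A4_log(1)] by (elim exE) (erule that)
  obtain nco mo ko ao bo co do where Ho: "\<forall>v r. (r \<le> ln (p\<omega> v)) \<longleftrightarrow> (\<exists>yy ww. (\<forall>l<(ko::nat). ww l \<in> \<int>) \<and>
        (\<forall>j<(nco::nat). (\<Sum>io\<in>UNIV. ao j io * (case io of Some jj \<Rightarrow> v $ jj | None \<Rightarrow> r))
                + (\<Sum>l<(mo::nat). bo j l * yy l) + (\<Sum>l<ko. co j l * ww l) \<le> do j))"
    using hypo_unpack[OF A4_log(2)] by (elim exE) (erule that)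
  obtain b1 where b1: "\<forall>x\<in>Xs. norm x \<le> b1" using A1_X(2) unfolding bounded_iff by blast
  obtain b2 where b2: "\<forall>x\<in>Ths. norm x \<le> b2" using A1_Th(2) unfolding bounded_iff by blast
  obtain b3 where b3: "\<forall>x\<in>Us. norm x \<le> b3" using A1_U(2) unfolding bounded_iff by blast
  define B0 where "B0 = max 1 (max b1 (max b2 b3))"
  have B0: "1 \<le> B0" "\<forall>x\<in>Xs. norm x \<le> B0" "\<forall>x\<in>Ths. norm x \<le> B0" "\<forall>x\<in>Us. norm x \<le> B0"
    using b1 b2 b3 unfolding B0_def by (auto intro: order_trans)

  define I' where "I' = I - {None}"
  define SJ where "SJ = (SIGMA i:{..<K}. J i)"
  define JN where "JN = (\<lambda>(i,l). Ny i l) ` ({..nx} \<times> {..<mn}) \<union> (\<lambda>(i,l). Nw i l) ` ({..nx} \<times> {..<kn}) \<union> Nr ` {..nx}"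
  define JO where "JO = (\<lambda>(i,l). Oy i l) ` ({..nu} \<times> {..<mo}) \<union> (\<lambda>(i,l). Ow i l) ` ({..nu} \<times> {..<ko}) \<union> Or ` {..nu}"
  define JD where "JD = (\<lambda>(t,i). Dl t i) ` ({..<N} \<times> {..<Ng})"
  define JP where "JP = (\<lambda>(t,P). Pz t P) ` ({..<N} \<times> Pow {..<nL})"
  define JT where "JT = (\<lambda>(t,ij). Ta t (fst ij) (snd ij)) ` ({..<N} \<times> SJ)"
  define JM where "JM = (\<lambda>(t,ij). Mu t (fst ij) (snd ij)) ` ({..<N} \<times> SJ)"
  define Jb where "Jb = JD \<union> JP \<union> JT \<union> JM"
  define JA where "JA = JN \<union> JO \<union> Jb"
  define KI where "KI = (\<lambda>(i,l). Nw i l) ` ({..nx} \<times> {..<kn}) \<union> (\<lambda>(i,l). Ow i l) ` ({..nu} \<times> {..<ko}) \<union> JD \<union> JP \<union> JT"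
  have finSJ: "finite SJ" unfolding SJ_def using A2_J by (intro finite_SigmaI) auto
  have finJb: "finite Jb" unfolding Jb_def JD_def JP_def JT_def JM_def using finSJ by auto
  have finJD: "finite JD" unfolding JD_def by auto
  have finJP: "finite JP" unfolding JP_def by auto
  have finJT: "finite JT" unfolding JT_def using finSJ by auto
  have finJM: "finite JM" unfolding JM_def using finSJ by auto
  have finJN: "finite JN" unfolding JN_def by auto
  have memJD: "Dl t i \<in> JD" if "t < N" "i < Ng" for t i
    unfolding JD_def using that by (intro rev_image_eqI[of "(t,i)"]) auto
  have memJP: "Pz t P \<in> JP" if "t < N" "P \<subseteq> {..<nL}" for t P
    unfolding JP_def using that by (intro rev_image_eqI[of "(t,P)"]) auto
  have memJT: "Ta t i j \<in> JT" if "t < N" "i < K" "j \<in> J i" for t i j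
    unfolding JT_def SJ_def using that by (intro rev_image_eqI[of "(t,(i,j))"]) auto
  have memJM: "Mu t i j \<in> JM" if "t < N" "i < K" "j \<in> J i" for t i j
    unfolding JM_def SJ_def using that by (intro rev_image_eqI[of "(t,(i,j))"]) auto
  have finJO: "finite JO" unfolding JO_def by auto
  have finJA: "finite JA" unfolding JA_def using finJb finJN finJO by auto
  have KIJA: "KI \<subseteq> JA" unfolding KI_def JA_def JN_def JO_def Jb_def by auto
  have fI': "finite I'" unfolding I'_def using fI by auto
  have I'I: "I' \<subseteq> I" unfolding I'_def by auto
  have JbJA: "Jb \<subseteq> JA" unfolding JA_def by auto
  define hv where "hv (z::(nat \<times> ('x + 'th + 'u)) option \<Rightarrow> real) t = A *v zX z t + B *v zU z t + k" for z t
  define wv where "wv (z::(nat \<times> ('x + 'th + 'u)) option \<Rightarrow> real) t = vcat (zX z t) (vcat (zU z t) (vcat (zT z t) (\<pi> t)))" for z t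
  define affE where "affE t i j z = F i j \<bullet> vcat (hv z t) (vcat (zU z t) (vcat (zT z t) (\<pi> t))) + \<zeta> i j" for t i j z
  define cE where "cE t z (y::av \<Rightarrow> real) = cvec Q H B (hv z t) (zU z t) (zT z t) (\<pi> t) + (\<Sum>i<K. \<Sum>j\<in>J i. y (Mu t i j) *\<^sub>R Fvec (F i j) B)" for t z y
  define bigM where "bigM E j = (\<lambda>(z::(nat \<times> ('x + 'th + 'u)) option \<Rightarrow> real) (y::av \<Rightarrow> real). E z y - MB I' Jb B0 E * (1 - y j))" for E j
  have bigM_lin: "islin I JA (bigM E j)" if "islin I' Jb E" "j \<in> JA" for E j
  proof -
    have "islin I JA E" using islin_mono[OF that(1) I'I JbJA fI finJA] .
    then show ?thesis unfolding bigM_def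
      by (intro islin_diff islin_cmul islin_const islin_y that(2) finJA)
  qed
  define C1 where "C1 = {\<lambda>(z::(nat \<times> ('x + 'th + 'u)) option \<Rightarrow> real) (y::av \<Rightarrow> real). z None - (\<Sum>i\<le>nx. y (Nr i)) - (\<Sum>j\<le>nu. y (Or j))}"
  define C2 where "C2 = (\<lambda>(i,jc). \<lambda>(z::(nat \<times> ('x + 'th + 'u)) option \<Rightarrow> real) (y::av \<Rightarrow> real).
      (\<Sum>io\<in>UNIV. an jc io * (case io of Some jj \<Rightarrow> (xt i - D *v zX z (tx i)) $ jj | None \<Rightarrow> y (Nr i)))
      + (\<Sum>l<mn. bn jc l * y (Ny i l)) + (\<Sum>l<kn. cn jc l * y (Nw i l)) - dn jc) ` ({..nx} \<times> {..<ncn})"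
  define C3 where "C3 = (\<lambda>(i,jc). \<lambda>(z::(nat \<times> ('x + 'th + 'u)) option \<Rightarrow> real) (y::av \<Rightarrow> real).
      (\<Sum>io\<in>UNIV. ao jc io * (case io of Some jj \<Rightarrow> (yt i - C *v zU z (tu i)) $ jj | None \<Rightarrow> y (Or i)))
      + (\<Sum>l<mo. bo jc l * y (Oy i l)) + (\<Sum>l<ko. co jc l * y (Ow i l)) - do jc) ` ({..nu} \<times> {..<nco})"
  define C4 where "C4 = (\<lambda>(t,q,s::real). \<lambda>z (y::av \<Rightarrow> real). s * ((zX z (Suc t) - hv z t) $ q)) ` ({..<N} \<times> UNIV \<times> {1,-1})"
  define C5 where "C5 = (\<lambda>(t,l). \<lambda>(z::(nat \<times> ('x + 'th + 'u)) option \<Rightarrow> real) (y::av \<Rightarrow> real). aX l \<bullet> zX z t - bX l) ` ({..N} \<times> {..<nX})"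
  define C6 where "C6 = (\<lambda>(t,l). \<lambda>(z::(nat \<times> ('x + 'th + 'u)) option \<Rightarrow> real) (y::av \<Rightarrow> real). aT l \<bullet> zT z t - bT l) ` ({..N} \<times> {..<nT})"
  define C7 where "C7 = (\<lambda>(t,l). \<lambda>(z::(nat \<times> ('x + 'th + 'u)) option \<Rightarrow> real) (y::av \<Rightarrow> real). aU l \<bullet> zU z t - bU l) ` ({..<N} \<times> {..<nL})"
  define C8 where "C8 = (\<lambda>j. \<lambda>(z::(nat \<times> ('x + 'th + 'u)) option \<Rightarrow> real) (y::av \<Rightarrow> real). - y j) ` Jb"
  define C9 where "C9 = (\<lambda>j. \<lambda>(z::(nat \<times> ('x + 'th + 'u)) option \<Rightarrow> real) (y::av \<Rightarrow> real). y j - 1) ` (JD \<union> JP \<union> JT)"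
  define C10 where "C10 = (\<lambda>(t,s::real). \<lambda>(z::(nat \<times> ('x + 'th + 'u)) option \<Rightarrow> real) (y::av \<Rightarrow> real). s * ((\<Sum>i<Ng. y (Dl t i)) - 1)) ` ({..<N} \<times> {1,-1})"
  define C11 where "C11 = (\<lambda>(t,ir). bigM (\<lambda>z y. Bm (fst ir) (snd ir) \<bullet> wv z t - \<psi> (fst ir) (snd ir)) (Dl t (fst ir)))
      ` ({..<N} \<times> (SIGMA i:{..<Ng}. {..<mB i}))"
  define C12 where "C12 = (\<lambda>(t,i,q,s::real). bigM (\<lambda>z y. s * ((zT z (Suc t) - (G i *v wv z t + chi i)) $ q)) (Dl t i))
      ` ({..<N} \<times> {..<Ng} \<times> UNIV \<times> {1,-1})"
  define C13 where "C13 = (\<lambda>(t,s::real). \<lambda>(z::(nat \<times> ('x + 'th + 'u)) option \<Rightarrow> real) (y::av \<Rightarrow> real). s * ((\<Sum>P\<in>Pow {..<nL}. y (Pz t P)) - 1)) ` ({..<N} \<times> {1,-1})"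
  define C14 where "C14 = (\<lambda>(t,Pl). bigM (\<lambda>z y. bU (snd Pl) - aU (snd Pl) \<bullet> zU z t) (Pz t (fst Pl)))
      ` ({..<N} \<times> (SIGMA P:Pow {..<nL}. P))"
  define C15 where "C15 = (\<lambda>(t,Pr). bigM (\<lambda>z y. hH (fst Pr) (snd Pr) \<bullet> cE t z y - eH (fst Pr) (snd Pr)) (Pz t (fst Pr)))
      ` ({..<N} \<times> (SIGMA P:Pow {..<nL}. {..<nH P}))"
  define C16 where "C16 = (\<lambda>(t,i,s::real). \<lambda>(z::(nat \<times> ('x + 'th + 'u)) option \<Rightarrow> real) (y::av \<Rightarrow> real). s * ((\<Sum>j\<in>J i. y (Mu t i j)) - 1)) ` ({..<N} \<times> {..<K} \<times> {1,-1})"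
  define C17 where "C17 = (\<lambda>(t,ij). \<lambda>(z::(nat \<times> ('x + 'th + 'u)) option \<Rightarrow> real) (y::av \<Rightarrow> real). y (Mu t (fst ij) (snd ij)) - y (Ta t (fst ij) (snd ij))) ` ({..<N} \<times> SJ)"
  define C18 where "C18 = (\<lambda>(t,ijj). bigM (\<lambda>z y. affE t (fst ijj) (fst (snd ijj)) z - affE t (fst ijj) (snd (snd ijj)) z) (Ta t (fst ijj) (fst (snd ijj))))
      ` ({..<N} \<times> (SIGMA i:{..<K}. J i \<times> J i))"
  define Cs where "Cs = C1 \<union> C2 \<union> C3 \<union> C4 \<union> C5 \<union> C6 \<union> C7 \<union> C8 \<union> C9 \<union> C10 \<union> C11 \<union> C12 \<union> C13 \<union> C14 \<union> C15 \<union> C16 \<union> C17 \<union> C18"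
  have finSJ2: "finite (SIGMA i:{..<K}. J i \<times> J i)" using A2_J by (intro finite_SigmaI) auto
  have finCs: "finite Cs" unfolding Cs_def C1_def C2_def C3_def C4_def C5_def C6_def C7_def C8_def C9_def C10_def
      C11_def C12_def C13_def C14_def C15_def C16_def C17_def C18_def
    using finSJ finSJ2 finJb by (auto simp: JD_def JP_def JT_def intro!: finite_SigmaI intro: finite_subset)

  have lin: "\<forall>lc\<in>Cs. islin I JA lc"
  proof -
    have l1: "\<forall>lc\<in>C1. islin I JA lc" unfolding C1_def
      by (clarsimp; intro lin_intros; auto simp: fI finJA finite_enc_idx finJb finJN finJO finJD finJP finJT finJM I_def JA_def JN_def JO_def)
    have l2: "\<forall>lc\<in>C2. islin I JA lc" unfolding C2_def
      by (intro ballI, elim imageE, clarsimp; intro lin_intros; auto simp: fI finJA finite_enc_idx finJb finJN finJO finJD finJP finJT finJM I_def JA_def JN_def JO_def times_x)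
    have l3: "\<forall>lc\<in>C3. islin I JA lc" unfolding C3_def
      by (intro ballI, elim imageE, clarsimp; intro lin_intros; auto simp: fI finJA finite_enc_idx finJb finJN finJO finJD finJP finJT finJM I_def JA_def JN_def JO_def times_u)
    have l4: "\<forall>lc\<in>C4. islin I JA lc" unfolding C4_def hv_def
      by (intro ballI, elim imageE, clarsimp; intro lin_intros; auto simp: fI finJA finite_enc_idx finJb finJN finJO finJD finJP finJT finJM I_def)
    have l5: "\<forall>lc\<in>C5. islin I JA lc" unfolding C5_def
      by (intro ballI, elim imageE, clarsimp; intro lin_intros; auto simp: fI finJA finite_enc_idx finJb finJN finJO finJD finJP finJT finJM I_def)
    have l6: "\<forall>lc\<in>C6. islin I JA lc" unfolding C6_def
      by (intro ballI, elim imageE, clarsimp; intro lin_intros; auto simp: fI finJA finite_enc_idx finJb finJN finJO finJD finJP finJT finJM I_def)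
    have l7: "\<forall>lc\<in>C7. islin I JA lc" unfolding C7_def
      by (intro ballI, elim imageE, clarsimp; intro lin_intros; auto simp: fI finJA finite_enc_idx finJb finJN finJO finJD finJP finJT finJM I_def)
    have l8: "\<forall>lc\<in>C8. islin I JA lc" unfolding C8_def
      by (intro ballI, elim imageE, clarsimp; intro lin_intros; auto simp: fI finJA finite_enc_idx finJb finJN finJO finJD finJP finJT finJM JA_def)
    have l9: "\<forall>lc\<in>C9. islin I JA lc" unfolding C9_def
      by (intro ballI, elim imageE, clarsimp; intro lin_intros; auto simp: fI finJA finite_enc_idx finJb finJN finJO finJD finJP finJT finJM JA_def Jb_def)
    have l10: "\<forall>lc\<in>C10. islin I JA lc" unfolding C10_def
      by (intro ballI, elim imageE, clarsimp; intro lin_intros; auto simp: fI finJA finite_enc_idx finJb finJN finJO finJD finJP finJT finJM JA_def Jb_def memJD)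
    have l11: "\<forall>lc\<in>C11. islin I JA lc" unfolding C11_def wv_def
      by (intro ballI, elim imageE, clarsimp; intro bigM_lin lin_intros; auto simp: fI' finJb finite_enc_idx finJD finJP finJT finJM JA_def Jb_def memJD I'_def I_def)
    have l12: "\<forall>lc\<in>C12. islin I JA lc" unfolding C12_def wv_def
      by (intro ballI, elim imageE, clarsimp; intro bigM_lin lin_intros; auto simp: fI' finJb finite_enc_idx finJD finJP finJT finJM JA_def Jb_def memJD I'_def I_def)
    have l13: "\<forall>lc\<in>C13. islin I JA lc" unfolding C13_def
      by (intro ballI, elim imageE, clarsimp; intro lin_intros; auto simp: fI finJA finite_enc_idx finJb finJN finJO finJD finJP finJT finJM JA_def Jb_def memJP)
    have l14: "\<forall>lc\<in>C14. islin I JA lc" unfolding C14_def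
      by (intro ballI, elim imageE, clarsimp; intro bigM_lin lin_intros; auto simp: fI' finJb finite_enc_idx finJD finJP finJT finJM JA_def Jb_def memJP I'_def I_def)
    have l15: "\<forall>lc\<in>C15. islin I JA lc" unfolding C15_def cE_def hv_def
      by (intro ballI, elim imageE, clarsimp; intro bigM_lin lin_intros; auto simp: fI' finJb finite_enc_idx finJD finJP finJT finJM JA_def Jb_def memJP memJM I'_def I_def A2_J)
    have l16: "\<forall>lc\<in>C16. islin I JA lc" unfolding C16_def
      by (intro ballI, elim imageE, clarsimp; intro lin_intros; auto simp: fI finJA finite_enc_idx finJb finJN finJO finJD finJP finJT finJM JA_def Jb_def memJM A2_J)
    have l17: "\<forall>lc\<in>C17. islin I JA lc" unfolding C17_def
      by (intro ballI, elim imageE, clarsimp; intro lin_intros; auto simp: fI finJA finite_enc_idx finJb finJN finJO finJD finJP finJT finJM JA_def Jb_def memJM memJT SJ_def)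
    have l18: "\<forall>lc\<in>C18. islin I JA lc" unfolding C18_def affE_def hv_def
      by (intro ballI, elim imageE, clarsimp; intro bigM_lin lin_intros; auto simp: fI' finJb finite_enc_idx finJD finJP finJT finJM JA_def Jb_def memJT I'_def I_def)
    show ?thesis unfolding Cs_def using l1 l2 l3 l4 l5 l6 l7 l8 l9 l10 l11 l12 l13 l14 l15 l16 l17 l18
      by (simp only: ball_Un)
  qed

  define RHS where "RHS = {z. (\<forall>i. i \<notin> I \<longrightarrow> z i = 0) \<and> (\<exists>y. (\<forall>j\<in>KI. y j \<in> \<int>) \<and> (\<forall>lc\<in>Cs. lc z y \<le> 0))}"
  have sup: "z \<in> mle_hypo N Xs Us Ths f h g \<pi> p\<nu> p\<omega> D C xt yt nx nu tx tu" if zR: "z \<in> RHS" for z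
  proof -
    obtain y where z0: "\<forall>i. i \<notin> I \<longrightarrow> z i = 0" and yint: "\<forall>j\<in>KI. y j \<in> \<int>" and cs: "\<forall>lc\<in>Cs. lc z y \<le> 0"
      using zR unfolding RHS_def by blast
    have c1: "\<forall>lc\<in>C1. lc z y \<le> 0" and c2: "\<forall>lc\<in>C2. lc z y \<le> 0" and c3: "\<forall>lc\<in>C3. lc z y \<le> 0"
      and c4: "\<forall>lc\<in>C4. lc z y \<le> 0" and c5: "\<forall>lc\<in>C5. lc z y \<le> 0" and c6: "\<forall>lc\<in>C6. lc z y \<le> 0"
      and c7: "\<forall>lc\<in>C7. lc z y \<le> 0" and c8: "\<forall>lc\<in>C8. lc z y \<le> 0" and c9: "\<forall>lc\<in>C9. lc z y \<le> 0"
      and c10: "\<forall>lc\<in>C10. lc z y \<le> 0" and c11: "\<forall>lc\<in>C11. lc z y \<le> 0" and c12: "\<forall>lc\<in>C12. lc z y \<le> 0"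
      and c13: "\<forall>lc\<in>C13. lc z y \<le> 0" and c14: "\<forall>lc\<in>C14. lc z y \<le> 0" and c15: "\<forall>lc\<in>C15. lc z y \<le> 0"
      and c16: "\<forall>lc\<in>C16. lc z y \<le> 0" and c17: "\<forall>lc\<in>C17. lc z y \<le> 0" and c18: "\<forall>lc\<in>C18. lc z y \<le> 0"
      using cs unfolding Cs_def ball_Un by blast+
    define X where "X = zX z"
    define \<Theta> where "\<Theta> = zT z"
    define U where "U = zU z"
    define r where "r = z None"
    have zenc: "z = enc N X \<Theta> U r" unfolding X_def \<Theta>_def U_def r_def
      using enc_recon[of N z] z0 unfolding I_def by blast
    have bin: "y j = 0 \<or> y j = 1" if "j \<in> JD \<union> JP \<union> JT" for j
    proof -
      have "- y j \<le> 0" using ball_img[OF c8[unfolded C8_def], of j] that by (auto simp: Jb_def)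
      moreover have "y j - 1 \<le> 0" using ball_img[OF c9[unfolded C9_def], of j] that by auto
      moreover have "y j \<in> \<int>" using yint that unfolding KI_def by blast
      ultimately show ?thesis using int01 by auto
    qed
    have Xin: "X t \<in> Xs" if "t \<le> N" for t
    proof -
      have "aX l \<bullet> X t - bX l \<le> 0" if "l < nX" for l
        using ball_img[OF c5[unfolded C5_def], of "(t,l)"] \<open>t \<le> N\<close> that by (simp add: X_def)
      then show ?thesis unfolding Xs_eq by auto
    qed
    have Thin: "\<Theta> t \<in> Ths" if "t \<le> N" for t
    proof -
      have "aT l \<bullet> \<Theta> t - bT l \<le> 0" if "l < nT" for l
        using ball_img[OF c6[unfolded C6_def], of "(t,l)"] \<open>t \<le> N\<close> that by (simp add: \<Theta>_def)
      then show ?thesis unfolding Ths_eq by auto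
    qed
    have Uc: "aU l \<bullet> U t \<le> bU l" if "t < N" "l < nL" for t l
      using ball_img[OF c7[unfolded C7_def], of "(t,l)"] that by (simp add: U_def)
    have Uin: "U t \<in> Us" if "t < N" for t using Uc that unfolding Us_eq by auto
    have dyn: "X (Suc t) = h (X t) (U t)" if "t < N" for t
    proof -
      have "(zX z (Suc t) - hv z t) $ q = 0" for q
      proof (rule two_sided, intro ballI)
        fix s :: real assume "s \<in> {1, -1}"
        then show "s * (zX z (Suc t) - hv z t) $ q \<le> 0"
          using ball_img[OF c4[unfolded C4_def], of "(t,q,s)"] that by simp
      qed
      then show ?thesis unfolding X_def U_def A3_h hv_def by (simp add: vec_eq_iff)
    qed
    have gdyn: "\<Theta> (Suc t) = g (X t) (U t) (\<Theta> t) (\<pi> t)" if t: "t < N" for t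
    proof -
      have "(\<Sum>i<Ng. y (Dl t i)) - 1 = 0"
      proof (rule two_sided, intro ballI)
        fix s :: real assume "s \<in> {1, -1}"
        then show "s * ((\<Sum>i<Ng. y (Dl t i)) - 1) \<le> 0"
          using ball_img[OF c10[unfolded C10_def], of "(t,s)"] t by simp
      qed
      moreover have "\<forall>i\<in>{..<Ng}. y (Dl t i) = 0 \<or> y (Dl t i) = 1" using bin memJD t by auto
      ultimately obtain i where i: "i < Ng" "y (Dl t i) = 1" using sum01[of "{..<Ng}" "\<lambda>i. y (Dl t i)"] by auto
      have reg: "\<forall>r<mB i. Bm i r \<bullet> vcat (X t) (vcat (U t) (vcat (\<Theta> t) (\<pi> t))) \<le> \<psi> i r"
      proof (intro allI impI)
        fix r assume "r < mB i"
        then show "Bm i r \<bullet> vcat (X t) (vcat (U t) (vcat (\<Theta> t) (\<pi> t))) \<le> \<psi> i r"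
          using ball_img[OF c11[unfolded C11_def], of "(t,(i,r))"] t i
          by (simp add: bigM_def wv_def X_def U_def \<Theta>_def)
      qed
      have geq: "g (X t) (U t) (\<Theta> t) (\<pi> t) = G i *v vcat (X t) (vcat (U t) (vcat (\<Theta> t) (\<pi> t))) + chi i"
        by (rule A3_g[OF i(1) reg])
      have "(zT z (Suc t) - (G i *v wv z t + chi i)) $ q = 0" for q
      proof (rule two_sided, intro ballI)
        fix s :: real assume "s \<in> {1, -1}"
        then show "s * (zT z (Suc t) - (G i *v wv z t + chi i)) $ q \<le> 0"
          using ball_img[OF c12[unfolded C12_def], of "(t,i,q,s)"] t i by (simp add: bigM_def)
      qed
      then show ?thesis using geq unfolding \<Theta>_def wv_def X_def U_def by (simp add: vec_eq_iff)
    qed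
    have opt: "\<forall>v\<in>Us. f (h (X t) v) v (\<Theta> t) (\<pi> t) \<le> f (h (X t) (U t)) (U t) (\<Theta> t) (\<pi> t)" if t: "t < N" for t
    proof -
      have "(\<Sum>P\<in>Pow {..<nL}. y (Pz t P)) - 1 = 0"
      proof (rule two_sided, intro ballI)
        fix s :: real assume "s \<in> {1, -1}"
        then show "s * ((\<Sum>P\<in>Pow {..<nL}. y (Pz t P)) - 1) \<le> 0"
          using ball_img[OF c13[unfolded C13_def], of "(t,s)"] t by simp
      qed
      moreover have "\<forall>P\<in>Pow {..<nL}. y (Pz t P) = 0 \<or> y (Pz t P) = 1" using bin memJP t by auto
      ultimately obtain P where P: "P \<in> Pow {..<nL}" "y (Pz t P) = 1"
        using sum01[of "Pow {..<nL}" "\<lambda>P. y (Pz t P)"] by auto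
      have act: "\<forall>l\<in>P. aU l \<bullet> U t = bU l"
      proof
        fix l assume l: "l \<in> P"
        have "bU l - aU l \<bullet> U t \<le> 0"
          using ball_img[OF c14[unfolded C14_def], of "(t,(P,l))"] t P l by (simp add: bigM_def U_def)
        moreover have "aU l \<bullet> U t \<le> bU l" using Uc t P l by auto
        ultimately show "aU l \<bullet> U t = bU l" by simp
      qed
      define \<mu> where "\<mu> i j = y (Mu t i j)" for i j
      have mu: "\<forall>i<K. (\<forall>j\<in>J i. 0 \<le> \<mu> i j \<and> (0 < \<mu> i j \<longrightarrow>
            (\<forall>j'\<in>J i. F i j \<bullet> vcat (h (X t) (U t)) (vcat (U t) (vcat (\<Theta> t) (\<pi> t))) + \<zeta> i j
                     \<le> F i j' \<bullet> vcat (h (X t) (U t)) (vcat (U t) (vcat (\<Theta> t) (\<pi> t))) + \<zeta> i j'))) \<and> sum (\<mu> i) (J i) = 1"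
      proof (intro allI impI conjI ballI)
        fix i j assume i: "i < K" and j: "j \<in> J i"
        show "0 \<le> \<mu> i j" using ball_img[OF c8[unfolded C8_def], of "Mu t i j"] memJM[OF t i j]
          by (simp add: Jb_def \<mu>_def)
        assume "0 < \<mu> i j"
        moreover have "\<mu> i j - y (Ta t i j) \<le> 0"
          using ball_img[OF c17[unfolded C17_def], of "(t,(i,j))"] t i j by (simp add: SJ_def \<mu>_def)
        ultimately have "y (Ta t i j) = 1" using bin memJT[OF t i j] by fastforce
        fix j' assume j': "j' \<in> J i"
        have "affE t i j z - affE t i j' z \<le> 0"
          using ball_img[OF c18[unfolded C18_def], of "(t,(i,(j,j')))"] t i j j' \<open>y (Ta t i j) = 1\<close>
          by (simp add: bigM_def)
        then show "F i j \<bullet> vcat (h (X t) (U t)) (vcat (U t) (vcat (\<Theta> t) (\<pi> t))) + \<zeta> i j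
                     \<le> F i j' \<bullet> vcat (h (X t) (U t)) (vcat (U t) (vcat (\<Theta> t) (\<pi> t))) + \<zeta> i j'"
          by (simp add: affE_def hv_def A3_h X_def U_def \<Theta>_def)
      next
        fix i assume i: "i < K"
        have "(\<Sum>j\<in>J i. y (Mu t i j)) - 1 = 0"
        proof (rule two_sided, intro ballI)
          fix s :: real assume "s \<in> {1, -1}"
          then show "s * ((\<Sum>j\<in>J i. y (Mu t i j)) - 1) \<le> 0"
            using ball_img[OF c16[unfolded C16_def], of "(t,i,s)"] t i by simp
        qed
        then show "sum (\<mu> i) (J i) = 1" by (simp add: \<mu>_def)
      qed
      have "cE t z y \<in> {x. \<forall>r<nH P. hH P r \<bullet> x \<le> eH P r}"
      proof (intro CollectI allI impI)
        fix r assume "r < nH P"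
        then show "hH P r \<bullet> cE t z y \<le> eH P r"
          using ball_img[OF c15[unfolded C15_def], of "(t,(P,r))"] t P by (simp add: bigM_def)
      qed
      then have cone: "cvec Q H B (h (X t) (U t)) (U t) (\<Theta> t) (\<pi> t) + (\<Sum>i<K. \<Sum>j\<in>J i. \<mu> i j *\<^sub>R Fvec (F i j) B)
           \<in> convex_cone hull (aU ` P)"
        using cone_eq[of P] P by (simp add: cE_def hv_def A3_h X_def U_def \<Theta>_def \<mu>_def)
      show ?thesis
        apply (rule iffD2[OF kkt_app[OF A2_form A2_J A2_Q A3_h Us_eq Uin[OF t], where x="X t" and \<theta>="\<Theta> t" and p="\<pi> t"]])
         apply simp
        apply (rule exI[of _ P], rule exI[of _ \<mu>])
        using P(1) act mu cone by (intro conjI) auto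
    qed
    have traj: "agent_traj N Xs Us Ths f h g \<pi> X \<Theta> U"
      unfolding agent_traj_def by (intro conjI allI impI) (auto intro: Uin opt[rule_format] dyn gdyn Xin Thin)
    have rn: "y (Nr i) \<le> ln (p\<nu> (xt i - D *v X (tx i)))" if i: "i \<le> nx" for i
    proof -
      have "(\<forall>l<kn. y (Nw i l) \<in> \<int>) \<and>
        (\<forall>j<ncn. (\<Sum>io\<in>UNIV. an j io * (case io of Some jj \<Rightarrow> (xt i - D *v X (tx i)) $ jj | None \<Rightarrow> y (Nr i)))
                + (\<Sum>l<mn. bn j l * y (Ny i l)) + (\<Sum>l<kn. cn j l * y (Nw i l)) \<le> dn j)"
      proof (intro conjI allI impI)
        fix l assume "l < kn"
        then have "Nw i l \<in> KI" unfolding KI_def using i by (intro UnI1 rev_image_eqI[of "(i,l)"]) auto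
        then show "y (Nw i l) \<in> \<int>" using yint by blast
      next
        fix j assume "j < ncn"
        then show "(\<Sum>io\<in>UNIV. an j io * (case io of Some jj \<Rightarrow> (xt i - D *v X (tx i)) $ jj | None \<Rightarrow> y (Nr i)))
                + (\<Sum>l<mn. bn j l * y (Ny i l)) + (\<Sum>l<kn. cn j l * y (Nw i l)) \<le> dn j"
          using ball_img[OF c2[unfolded C2_def], of "(i,j)"] i unfolding X_def by simp
      qed
      then have "\<exists>yy ww. (\<forall>l<kn. ww l \<in> \<int>) \<and>
        (\<forall>j<ncn. (\<Sum>io\<in>UNIV. an j io * (case io of Some jj \<Rightarrow> (xt i - D *v X (tx i)) $ jj | None \<Rightarrow> y (Nr i)))
                + (\<Sum>l<mn. bn j l * yy l) + (\<Sum>l<kn. cn j l * ww l) \<le> dn j)"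
        by - (intro exI[of _ "\<lambda>l. y (Ny i l)"] exI[of _ "\<lambda>l. y (Nw i l)"], assumption)
      then show ?thesis by (rule iffD2[OF Hn[rule_format]])
    qed
    have ro: "y (Or i) \<le> ln (p\<omega> (yt i - C *v U (tu i)))" if i: "i \<le> nu" for i
    proof -
      have "(\<forall>l<ko. y (Ow i l) \<in> \<int>) \<and>
        (\<forall>j<nco. (\<Sum>io\<in>UNIV. ao j io * (case io of Some jj \<Rightarrow> (yt i - C *v U (tu i)) $ jj | None \<Rightarrow> y (Or i)))
                + (\<Sum>l<mo. bo j l * y (Oy i l)) + (\<Sum>l<ko. co j l * y (Ow i l)) \<le> do j)"
      proof (intro conjI allI impI)
        fix l assume "l < ko"
        then have "Ow i l \<in> KI" unfolding KI_def using i by (intro UnI1 UnI2 rev_image_eqI[of "(i,l)"]) auto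
        then show "y (Ow i l) \<in> \<int>" using yint by blast
      next
        fix j assume "j < nco"
        then show "(\<Sum>io\<in>UNIV. ao j io * (case io of Some jj \<Rightarrow> (yt i - C *v U (tu i)) $ jj | None \<Rightarrow> y (Or i)))
                + (\<Sum>l<mo. bo j l * y (Oy i l)) + (\<Sum>l<ko. co j l * y (Ow i l)) \<le> do j"
          using ball_img[OF c3[unfolded C3_def], of "(i,j)"] i unfolding U_def by simp
      qed
      then have "\<exists>yy ww. (\<forall>l<ko. ww l \<in> \<int>) \<and>
        (\<forall>j<nco. (\<Sum>io\<in>UNIV. ao j io * (case io of Some jj \<Rightarrow> (yt i - C *v U (tu i)) $ jj | None \<Rightarrow> y (Or i)))
                + (\<Sum>l<mo. bo j l * yy l) + (\<Sum>l<ko. co j l * ww l) \<le> do j)"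
        by - (intro exI[of _ "\<lambda>l. y (Oy i l)"] exI[of _ "\<lambda>l. y (Ow i l)"], assumption)
      then show ?thesis by (rule iffD2[OF Ho[rule_format]])
    qed
    have "r \<le> (\<Sum>i\<le>nx. y (Nr i)) + (\<Sum>j\<le>nu. y (Or j))"
      using c1 unfolding C1_def by (simp add: r_def)
    also have "\<dots> \<le> mle_obj p\<nu> p\<omega> D C xt yt nx nu tx tu X U"
      unfolding mle_obj_def using rn ro by (intro add_mono sum_mono) auto
    finally have robj: "r \<le> mle_obj p\<nu> p\<omega> D C xt yt nx nu tx tu X U" .
    show ?thesis unfolding mle_hypo_def mem_Collect_eq
      by (intro exI[of _ X] exI[of _ \<Theta>] exI[of _ U] exI[of _ r] conjI zenc traj robj)
  qed

  have r11: "islin I' Jb (\<lambda>z y. Bm i r \<bullet> wv z t - \<psi> i r)" if "t < N" for t i r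
    unfolding wv_def using that by (intro lin_intros; auto simp: fI' I'_def I_def finite_enc_idx finJb)
  have r12: "islin I' Jb (\<lambda>z y. s * ((zT z (Suc t) - (G i *v wv z t + chi i)) $ q))" if "t < N" for t i q s
    unfolding wv_def using that by (intro lin_intros; auto simp: fI' I'_def I_def finite_enc_idx finJb)
  have r14: "islin I' Jb (\<lambda>z y. bU l - aU l \<bullet> zU z t)" if "t < N" for t l
    using that by (intro lin_intros; auto simp: fI' I'_def I_def finite_enc_idx finJb)
  have r15: "islin I' Jb (\<lambda>z y. hH P r \<bullet> cE t z y - eH P r)" if "t < N" for t P r
    unfolding cE_def hv_def using that
    by (intro lin_intros; auto simp: fI' I'_def I_def finite_enc_idx finJb finJD finJP finJT finJM Jb_def memJM A2_J)
  have r18: "islin I' Jb (\<lambda>z y. affE t i j z - affE t i j' z)" if "t < N" for t i j j'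
    unfolding affE_def hv_def using that by (intro lin_intros; auto simp: fI' I'_def I_def finite_enc_idx finJb)
  have bigM_ok: "bigM E j z y \<le> 0"
    if "islin I' Jb E" "\<forall>i\<in>I'. \<bar>z i\<bar> \<le> B0" "\<forall>j\<in>Jb. \<bar>y j\<bar> \<le> B0" "y j = 0 \<or> y j = 1"
       "y j = 1 \<Longrightarrow> E z y \<le> 0" for E j z y
  proof (cases "y j = 1")
    case True then show ?thesis using that(5) by (simp add: bigM_def)
  next
    case False
    then have "y j = 0" using that(4) by simp
    moreover have "\<bar>E z y\<bar> \<le> MB I' Jb B0 E" by (rule MB_bound[OF that(1-3)])
    ultimately show ?thesis by (simp add: bigM_def)
  qed

  define KK where "KK X \<Theta> U t P \<mu> \<longleftrightarrow> P \<subseteq> {..<nL} \<and> (\<forall>l\<in>P. aU l \<bullet> U t = bU l) \<and>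
       (\<forall>i<K. (\<forall>j\<in>J i. 0 \<le> \<mu> i j \<and> (0 < \<mu> i j \<longrightarrow>
            (\<forall>j'\<in>J i. F i j \<bullet> vcat (h (X t) (U t)) (vcat (U t) (vcat (\<Theta> t) (\<pi> t))) + \<zeta> i j
                     \<le> F i j' \<bullet> vcat (h (X t) (U t)) (vcat (U t) (vcat (\<Theta> t) (\<pi> t))) + \<zeta> i j'))) \<and> sum (\<mu> i) (J i) = 1) \<and>
       cvec Q H B (h (X t) (U t)) (U t) (\<Theta> t) (\<pi> t) + (\<Sum>i<K. \<Sum>j\<in>J i. \<mu> i j *\<^sub>R Fvec (F i j) B) \<in> convex_cone hull (aU ` P)"
    for X :: "nat \<Rightarrow> real^'x" and \<Theta> :: "nat \<Rightarrow> real^'th" and U :: "nat \<Rightarrow> real^'u" and t P and \<mu> :: "nat \<Rightarrow> nat \<Rightarrow> real"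
  have sub: "z \<in> RHS" if zM: "z \<in> mle_hypo N Xs Us Ths f h g \<pi> p\<nu> p\<omega> D C xt yt nx nu tx tu" for z
  proof -
    obtain X \<Theta> U r where zenc: "z = enc N X \<Theta> U r" and traj: "agent_traj N Xs Us Ths f h g \<pi> X \<Theta> U"
      and robj: "r \<le> mle_obj p\<nu> p\<omega> D C xt yt nx nu tx tu X U"
      using zM unfolding mle_hypo_def by blast
    have zXe: "zX z t = X t" if "t \<le> N" for t using zX_enc[OF that] zenc by simp
    have zTe: "zT z t = \<Theta> t" if "t \<le> N" for t using zT_enc[OF that] zenc by simp
    have zUe: "zU z t = U t" if "t < N" for t using zU_enc[OF that] zenc by simp
    have zNe: "z None = r" using zenc by (simp add: none_enc)
    have Uin: "U t \<in> Us" and opt: "\<forall>v\<in>Us. f (h (X t) v) v (\<Theta> t) (\<pi> t) \<le> f (h (X t) (U t)) (U t) (\<Theta> t) (\<pi> t)"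
      and dyn: "X (Suc t) = h (X t) (U t)" and gdyn: "\<Theta> (Suc t) = g (X t) (U t) (\<Theta> t) (\<pi> t)" if "t < N" for t
      using traj that unfolding agent_traj_def by blast+
    have Xin: "X t \<in> Xs" and Thin: "\<Theta> t \<in> Ths" if "t \<le> N" for t
      using traj that unfolding agent_traj_def by blast+
    have "\<forall>t. \<exists>PM. t < N \<longrightarrow> KK X \<Theta> U t (fst PM) (snd PM)"
    proof
      fix t show "\<exists>PM. t < N \<longrightarrow> KK X \<Theta> U t (fst PM) (snd PM)"
      proof (cases "t < N")
        case True
        have "\<exists>P \<mu>. KK X \<Theta> U t P \<mu>" unfolding KK_def
          using iffD1[OF kkt_app[OF A2_form A2_J A2_Q A3_h Us_eq Uin[OF True], where x="X t" and \<theta>="\<Theta> t" and p="\<pi> t"] opt[OF True]]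
          by simp
        then obtain P \<mu> where "KK X \<Theta> U t P \<mu>" by blast
        then show ?thesis by (intro exI[of _ "(P, \<mu>)"]) simp
      qed simp
    qed
    from choice[OF this] obtain PM where PM: "\<And>t. t < N \<Longrightarrow> KK X \<Theta> U t (fst (PM t)) (snd (PM t))" by blast
    define Pt where "Pt t = fst (PM t)" for t
    define \<mu>t where "\<mu>t t = snd (PM t)" for t
    have KKt: "KK X \<Theta> U t (Pt t) (\<mu>t t)" if "t < N" for t using PM[OF that] by (simp add: Pt_def \<mu>t_def)
    have "\<forall>t. \<exists>i. t < N \<longrightarrow> i < Ng \<and> (\<forall>r<mB i. Bm i r \<bullet> vcat (X t) (vcat (U t) (vcat (\<Theta> t) (\<pi> t))) \<le> \<psi> i r)"
    proof
      fix t show "\<exists>i. t < N \<longrightarrow> i < Ng \<and> (\<forall>r<mB i. Bm i r \<bullet> vcat (X t) (vcat (U t) (vcat (\<Theta> t) (\<pi> t))) \<le> \<psi> i r)"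
      proof (cases "t < N")
        case True
        then show ?thesis using A3_cover[OF Xin Uin Thin inc] True by (meson less_imp_le)
      qed simp
    qed
    from choice[OF this] obtain sel where sel: "\<And>t. t < N \<Longrightarrow> sel t < Ng \<and> (\<forall>r<mB (sel t). Bm (sel t) r \<bullet> vcat (X t) (vcat (U t) (vcat (\<Theta> t) (\<pi> t))) \<le> \<psi> (sel t) r)"
      by blast
    have "\<forall>i. \<exists>yw::(nat \<Rightarrow> real) \<times> (nat \<Rightarrow> real). i \<le> nx \<longrightarrow> (\<forall>l<kn. snd yw l \<in> \<int>) \<and>
        (\<forall>j<ncn. (\<Sum>io\<in>UNIV. an j io * (case io of Some jj \<Rightarrow> (xt i - D *v X (tx i)) $ jj | None \<Rightarrow> ln (p\<nu> (xt i - D *v X (tx i)))))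
                + (\<Sum>l<mn. bn j l * fst yw l) + (\<Sum>l<kn. cn j l * snd yw l) \<le> dn j)"
    proof
      fix i
      obtain yy ww where "(\<forall>l<kn. ww l \<in> \<int>) \<and>
        (\<forall>j<ncn. (\<Sum>io\<in>UNIV. an j io * (case io of Some jj \<Rightarrow> (xt i - D *v X (tx i)) $ jj | None \<Rightarrow> ln (p\<nu> (xt i - D *v X (tx i)))))
                + (\<Sum>l<mn. bn j l * yy l) + (\<Sum>l<kn. cn j l * ww l) \<le> dn j)"
        using iffD1[OF Hn[rule_format, where v="xt i - D *v X (tx i)" and r="ln (p\<nu> (xt i - D *v X (tx i)))"] order_refl] by (elim exE) (erule that)
      then show "\<exists>yw::(nat \<Rightarrow> real) \<times> (nat \<Rightarrow> real). i \<le> nx \<longrightarrow> (\<forall>l<kn. snd yw l \<in> \<int>) \<and>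
        (\<forall>j<ncn. (\<Sum>io\<in>UNIV. an j io * (case io of Some jj \<Rightarrow> (xt i - D *v X (tx i)) $ jj | None \<Rightarrow> ln (p\<nu> (xt i - D *v X (tx i)))))
                + (\<Sum>l<mn. bn j l * fst yw l) + (\<Sum>l<kn. cn j l * snd yw l) \<le> dn j)"
        by (intro exI[of _ "(yy, ww)"]) simp
    qed
    from choice[OF this] obtain YN where YN: "\<And>i. i \<le> nx \<Longrightarrow> (\<forall>l<kn. snd (YN i) l \<in> \<int>) \<and>
        (\<forall>j<ncn. (\<Sum>io\<in>UNIV. an j io * (case io of Some jj \<Rightarrow> (xt i - D *v X (tx i)) $ jj | None \<Rightarrow> ln (p\<nu> (xt i - D *v X (tx i)))))
                + (\<Sum>l<mn. bn j l * fst (YN i) l) + (\<Sum>l<kn. cn j l * snd (YN i) l) \<le> dn j)"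
      by blast
    have "\<forall>i. \<exists>yw::(nat \<Rightarrow> real) \<times> (nat \<Rightarrow> real). i \<le> nu \<longrightarrow> (\<forall>l<ko. snd yw l \<in> \<int>) \<and>
        (\<forall>j<nco. (\<Sum>io\<in>UNIV. ao j io * (case io of Some jj \<Rightarrow> (yt i - C *v U (tu i)) $ jj | None \<Rightarrow> ln (p\<omega> (yt i - C *v U (tu i)))))
                + (\<Sum>l<mo. bo j l * fst yw l) + (\<Sum>l<ko. co j l * snd yw l) \<le> do j)"
    proof
      fix i
      obtain yy ww where "(\<forall>l<ko. ww l \<in> \<int>) \<and>
        (\<forall>j<nco. (\<Sum>io\<in>UNIV. ao j io * (case io of Some jj \<Rightarrow> (yt i - C *v U (tu i)) $ jj | None \<Rightarrow> ln (p\<omega> (yt i - C *v U (tu i)))))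
                + (\<Sum>l<mo. bo j l * yy l) + (\<Sum>l<ko. co j l * ww l) \<le> do j)"
        using iffD1[OF Ho[rule_format, where v="yt i - C *v U (tu i)" and r="ln (p\<omega> (yt i - C *v U (tu i)))"] order_refl] by (elim exE) (erule that)
      then show "\<exists>yw::(nat \<Rightarrow> real) \<times> (nat \<Rightarrow> real). i \<le> nu \<longrightarrow> (\<forall>l<ko. snd yw l \<in> \<int>) \<and>
        (\<forall>j<nco. (\<Sum>io\<in>UNIV. ao j io * (case io of Some jj \<Rightarrow> (yt i - C *v U (tu i)) $ jj | None \<Rightarrow> ln (p\<omega> (yt i - C *v U (tu i)))))
                + (\<Sum>l<mo. bo j l * fst yw l) + (\<Sum>l<ko. co j l * snd yw l) \<le> do j)"
        by (intro exI[of _ "(yy, ww)"]) simp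
    qed
    from choice[OF this] obtain YO where YO: "\<And>i. i \<le> nu \<Longrightarrow> (\<forall>l<ko. snd (YO i) l \<in> \<int>) \<and>
        (\<forall>j<nco. (\<Sum>io\<in>UNIV. ao j io * (case io of Some jj \<Rightarrow> (yt i - C *v U (tu i)) $ jj | None \<Rightarrow> ln (p\<omega> (yt i - C *v U (tu i)))))
                + (\<Sum>l<mo. bo j l * fst (YO i) l) + (\<Sum>l<ko. co j l * snd (YO i) l) \<le> do j)"
      by blast
    define y where "y a = (case a of Ny i l \<Rightarrow> fst (YN i) l | Nw i l \<Rightarrow> snd (YN i) l
        | Nr i \<Rightarrow> ln (p\<nu> (xt i - D *v X (tx i)))
        | Oy i l \<Rightarrow> fst (YO i) l | Ow i l \<Rightarrow> snd (YO i) l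
        | Or i \<Rightarrow> ln (p\<omega> (yt i - C *v U (tu i)))
        | Dl t i \<Rightarrow> (if i = sel t then 1 else 0)
        | Pz t P \<Rightarrow> (if P = Pt t then 1 else 0)
        | Ta t i j \<Rightarrow> (if 0 < \<mu>t t i j then 1 else 0)
        | Mu t i j \<Rightarrow> \<mu>t t i j)" for a

    have yNr[simp]: "y (Nr i) = ln (p\<nu> (xt i - D *v X (tx i)))"
      and yOr[simp]: "y (Or i) = ln (p\<omega> (yt i - C *v U (tu i)))"
      and yNy[simp]: "y (Ny i l) = fst (YN i) l" and yNw[simp]: "y (Nw i l) = snd (YN i) l"
      and yOy[simp]: "y (Oy i l) = fst (YO i) l" and yOw[simp]: "y (Ow i l) = snd (YO i) l"
      and yDl[simp]: "y (Dl t i) = (if i = sel t then 1 else 0)"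
      and yPz[simp]: "y (Pz t P) = (if P = Pt t then 1 else 0)"
      and yTa[simp]: "y (Ta t i j) = (if 0 < \<mu>t t i j then 1 else 0)"
      and yMu[simp]: "y (Mu t i j) = \<mu>t t i j" for i l t P j
      by (simp_all add: y_def)
    have mub: "0 \<le> \<mu>t t i j \<and> \<mu>t t i j \<le> 1" if t: "t < N" and i: "i < K" and j: "j \<in> J i" for t i j
    proof -
      have k: "(\<forall>j\<in>J i. 0 \<le> \<mu>t t i j) \<and> sum (\<mu>t t i) (J i) = 1" using KKt[OF t] i unfolding KK_def by blast
      then have "\<mu>t t i j \<le> sum (\<mu>t t i) (J i)" using A2_J[OF i] j by (intro member_le_sum) auto
      then show ?thesis using k j by auto
    qed
    have bz: "\<forall>i\<in>I'. \<bar>z i\<bar> \<le> B0"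
    proof
      fix i assume iI: "i \<in> I'"
      then obtain t c where i: "i = Some (t, c)" unfolding I'_def by (cases i) auto
      show "\<bar>z i\<bar> \<le> B0"
      proof (cases c)
        case (Inl j)
        then have t: "t \<le> N" using iI i by (simp add: I'_def I_def)
        have "z i = X t $ j" using zXe[OF t] unfolding i Inl zX_def by (simp add: vec_eq_iff)
        then show ?thesis using component_le_norm_cart[of "X t" j] B0(2) Xin[OF t] by force
      next
        case (Inr c')
        show ?thesis
        proof (cases c')
          case (Inl j)
          then have t: "t \<le> N" using iI i Inr by (simp add: I'_def I_def)
          have "z i = \<Theta> t $ j" using zTe[OF t] unfolding i Inr Inl zT_def by (simp add: vec_eq_iff)
          then show ?thesis using component_le_norm_cart[of "\<Theta> t" j] B0(3) Thin[OF t] by force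
        next
          case (Inr j)
          then have t: "t < N" using iI i \<open>c = Inr c'\<close> by (simp add: I'_def I_def)
          have "z i = U t $ j" using zUe[OF t] unfolding i \<open>c = Inr c'\<close> Inr zU_def by (simp add: vec_eq_iff)
          then show ?thesis using component_le_norm_cart[of "U t" j] B0(4) Uin[OF t] by force
        qed
      qed
    qed
    have by': "\<forall>j\<in>Jb. \<bar>y j\<bar> \<le> B0"
    proof
      fix a assume "a \<in> Jb"
      then show "\<bar>y a\<bar> \<le> B0" unfolding Jb_def JD_def JP_def JT_def JM_def SJ_def
        using B0(1) mub by auto (meson mub order_trans B0(1))
    qed
    have c1: "\<forall>lc\<in>C1. lc z y \<le> 0" unfolding C1_def using robj zNe
      by (simp add: mle_obj_def)
    have c2: "\<forall>lc\<in>C2. lc z y \<le> 0" unfolding C2_def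
    proof (intro ballI, elim imageE)
      fix lc p assume lc: "lc = (case p of (i, jc) \<Rightarrow> \<lambda>(z::(nat \<times> ('x + 'th + 'u)) option \<Rightarrow> real) (y::av \<Rightarrow> real).
      (\<Sum>io\<in>UNIV. an jc io * (case io of Some jj \<Rightarrow> (xt i - D *v zX z (tx i)) $ jj | None \<Rightarrow> y (Nr i)))
      + (\<Sum>l<mn. bn jc l * y (Ny i l)) + (\<Sum>l<kn. cn jc l * y (Nw i l)) - dn jc)" and p: "p \<in> {..nx} \<times> {..<ncn}"
      obtain i jc where p': "p = (i, jc)" by (cases p)
      have i: "i \<le> nx" and jc: "jc < ncn" using p p' by auto
      show "lc z y \<le> 0" unfolding lc p' using YN[OF i] jc zXe[OF times_x[OF i]]
        by (simp cong: option.case_cong)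
    qed
    have c3: "\<forall>lc\<in>C3. lc z y \<le> 0" unfolding C3_def
    proof (intro ballI, elim imageE)
      fix lc p assume lc: "lc = (case p of (i, jc) \<Rightarrow> \<lambda>(z::(nat \<times> ('x + 'th + 'u)) option \<Rightarrow> real) (y::av \<Rightarrow> real).
      (\<Sum>io\<in>UNIV. ao jc io * (case io of Some jj \<Rightarrow> (yt i - C *v zU z (tu i)) $ jj | None \<Rightarrow> y (Or i)))
      + (\<Sum>l<mo. bo jc l * y (Oy i l)) + (\<Sum>l<ko. co jc l * y (Ow i l)) - do jc)" and p: "p \<in> {..nu} \<times> {..<nco}"
      obtain i jc where p': "p = (i, jc)" by (cases p)
      have i: "i \<le> nu" and jc: "jc < nco" using p p' by auto
      show "lc z y \<le> 0" unfolding lc p' using YO[OF i] jc zUe[OF times_u[OF i]]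
        by (simp cong: option.case_cong)
    qed
    have c4: "\<forall>lc\<in>C4. lc z y \<le> 0" unfolding C4_def
      using zXe zUe dyn by (auto simp: hv_def A3_h)
    have c5: "\<forall>lc\<in>C5. lc z y \<le> 0" unfolding C5_def using zXe Xin by (auto simp: Xs_eq)
    have c6: "\<forall>lc\<in>C6. lc z y \<le> 0" unfolding C6_def using zTe Thin by (auto simp: Ths_eq)
    have c7: "\<forall>lc\<in>C7. lc z y \<le> 0" unfolding C7_def using zUe Uin by (auto simp: Us_eq)
    have c8: "\<forall>lc\<in>C8. lc z y \<le> 0" unfolding C8_def Jb_def JD_def JP_def JT_def JM_def SJ_def
      using mub by auto
    have c9: "\<forall>lc\<in>C9. lc z y \<le> 0" unfolding C9_def JD_def JP_def JT_def by auto
    have c10: "\<forall>lc\<in>C10. lc z y \<le> 0" unfolding C10_def using sel by (auto simp: if_distrib cong: if_cong)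

    have wvt: "wv z t = vcat (X t) (vcat (U t) (vcat (\<Theta> t) (\<pi> t)))" if "t < N" for t
      using that by (simp add: wv_def zXe zUe zTe)
    have hvt: "hv z t = h (X t) (U t)" if "t < N" for t
      using that by (simp add: hv_def zXe zUe A3_h)
    have c11: "\<forall>lc\<in>C11. lc z y \<le> 0" unfolding C11_def
    proof (intro ballI, elim imageE)
      fix lc p assume lc: "lc = (case p of (t, ir) \<Rightarrow> bigM (\<lambda>z y. Bm (fst ir) (snd ir) \<bullet> wv z t - \<psi> (fst ir) (snd ir)) (Dl t (fst ir)))"
        and p: "p \<in> {..<N} \<times> (SIGMA i:{..<Ng}. {..<mB i})"
      obtain t i r where p': "p = (t, (i, r))" by (cases p) auto
      have t: "t < N" and i: "i < Ng" and r: "r < mB i" using p p' by auto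
      have "bigM (\<lambda>z y. Bm i r \<bullet> wv z t - \<psi> i r) (Dl t i) z y \<le> 0"
      proof (rule bigM_ok[OF r11[OF t] bz by'])
        show "y (Dl t i) = 0 \<or> y (Dl t i) = 1" by simp
        assume "y (Dl t i) = 1"
        then have "i = sel t" by (simp split: if_splits)
        then show "Bm i r \<bullet> wv z t - \<psi> i r \<le> 0" using sel[OF t] r wvt[OF t] by simp
      qed
      then show "lc z y \<le> 0" unfolding lc p' by simp
    qed
    have c12: "\<forall>lc\<in>C12. lc z y \<le> 0" unfolding C12_def
    proof (intro ballI, elim imageE)
      fix lc p assume lc: "lc = (case p of (t, i, q, s::real) \<Rightarrow> bigM (\<lambda>z y. s * ((zT z (Suc t) - (G i *v wv z t + chi i)) $ q)) (Dl t i))"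
        and p: "p \<in> {..<N} \<times> {..<Ng} \<times> UNIV \<times> {1,-1}"
      obtain t i q s where p': "p = (t, (i, (q, s)))" by (cases p) auto
      have t: "t < N" using p p' by auto
      have "bigM (\<lambda>z y. s * ((zT z (Suc t) - (G i *v wv z t + chi i)) $ q)) (Dl t i) z y \<le> 0"
      proof (rule bigM_ok[OF r12[OF t] bz by'])
        show "y (Dl t i) = 0 \<or> y (Dl t i) = 1" by simp
        assume "y (Dl t i) = 1"
        then have si: "i = sel t" by (simp split: if_splits)
        have "g (X t) (U t) (\<Theta> t) (\<pi> t) = G i *v vcat (X t) (vcat (U t) (vcat (\<Theta> t) (\<pi> t))) + chi i"
          using A3_g[of i "X t" "U t" "\<Theta> t" "\<pi> t"] sel[OF t] si by blast
        moreover have "zT z (Suc t) = \<Theta> (Suc t)" using t by (intro zTe) simp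
        ultimately show "s * ((zT z (Suc t) - (G i *v wv z t + chi i)) $ q) \<le> 0"
          using gdyn[OF t] wvt[OF t] by simp
      qed
      then show "lc z y \<le> 0" unfolding lc p' by simp
    qed
    have c13: "\<forall>lc\<in>C13. lc z y \<le> 0" unfolding C13_def
    proof (intro ballI, elim imageE)
      fix lc p assume lc: "lc = (case p of (t, s::real) \<Rightarrow> \<lambda>(z::(nat \<times> ('x + 'th + 'u)) option \<Rightarrow> real) (y::av \<Rightarrow> real). s * ((\<Sum>P\<in>Pow {..<nL}. y (Pz t P)) - 1))"
        and p: "p \<in> {..<N} \<times> {1,-1}"
      obtain t s where p': "p = (t, s)" by (cases p) auto
      have t: "t < N" using p p' by auto
      have "Pt t \<in> Pow {..<nL}" using KKt[OF t] unfolding KK_def by auto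
      then have "(\<Sum>P\<in>Pow {..<nL}. y (Pz t P)) = 1" by (simp add: if_distrib cong: if_cong)
      then show "lc z y \<le> 0" unfolding lc p' by simp
    qed
    have c14: "\<forall>lc\<in>C14. lc z y \<le> 0" unfolding C14_def
    proof (intro ballI, elim imageE)
      fix lc p assume lc: "lc = (case p of (t, Pl) \<Rightarrow> bigM (\<lambda>z y. bU (snd Pl) - aU (snd Pl) \<bullet> zU z t) (Pz t (fst Pl)))"
        and p: "p \<in> {..<N} \<times> (SIGMA P:Pow {..<nL}. P)"
      obtain t P l where p': "p = (t, (P, l))" by (cases p) auto
      have t: "t < N" and l: "l \<in> P" using p p' by auto
      have "bigM (\<lambda>z y. bU l - aU l \<bullet> zU z t) (Pz t P) z y \<le> 0"
      proof (rule bigM_ok[OF r14[OF t] bz by'])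
        show "y (Pz t P) = 0 \<or> y (Pz t P) = 1" by simp
        assume "y (Pz t P) = 1"
        then have "P = Pt t" by (simp split: if_splits)
        then have "aU l \<bullet> U t = bU l" using KKt[OF t] l unfolding KK_def by blast
        then show "bU l - aU l \<bullet> zU z t \<le> 0" using zUe[OF t] by simp
      qed
      then show "lc z y \<le> 0" unfolding lc p' by simp
    qed
    have cEt: "cE t z y = cvec Q H B (h (X t) (U t)) (U t) (\<Theta> t) (\<pi> t) + (\<Sum>i<K. \<Sum>j\<in>J i. \<mu>t t i j *\<^sub>R Fvec (F i j) B)"
      if "t < N" for t
      using that by (simp add: cE_def hvt zUe zTe)
    have c15: "\<forall>lc\<in>C15. lc z y \<le> 0" unfolding C15_def
    proof (intro ballI, elim imageE)
      fix lc p assume lc: "lc = (case p of (t, Pr) \<Rightarrow> bigM (\<lambda>z y. hH (fst Pr) (snd Pr) \<bullet> cE t z y - eH (fst Pr) (snd Pr)) (Pz t (fst Pr)))"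
        and p: "p \<in> {..<N} \<times> (SIGMA P:Pow {..<nL}. {..<nH P})"
      obtain t P r where p': "p = (t, (P, r))" by (cases p) auto
      have t: "t < N" and r: "r < nH P" using p p' by auto
      have "bigM (\<lambda>z y. hH P r \<bullet> cE t z y - eH P r) (Pz t P) z y \<le> 0"
      proof (rule bigM_ok[OF r15[OF t] bz by'])
        show "y (Pz t P) = 0 \<or> y (Pz t P) = 1" by simp
        assume "y (Pz t P) = 1"
        then have PP: "P = Pt t" by (simp split: if_splits)
        have k: "Pt t \<subseteq> {..<nL}" "cvec Q H B (h (X t) (U t)) (U t) (\<Theta> t) (\<pi> t) + (\<Sum>i<K. \<Sum>j\<in>J i. \<mu>t t i j *\<^sub>R Fvec (F i j) B)
             \<in> convex_cone hull (aU ` Pt t)"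
          using KKt[OF t] unfolding KK_def by blast+
        then have "cE t z y \<in> {x. \<forall>r<nH P. hH P r \<bullet> x \<le> eH P r}"
          using cone_eq[OF k(1)] cEt[OF t] PP by simp
        then show "hH P r \<bullet> cE t z y - eH P r \<le> 0" using r by simp
      qed
      then show "lc z y \<le> 0" unfolding lc p' by simp
    qed
    have c16: "\<forall>lc\<in>C16. lc z y \<le> 0" unfolding C16_def
    proof (intro ballI, elim imageE)
      fix lc p assume lc: "lc = (case p of (t, i, s::real) \<Rightarrow> \<lambda>(z::(nat \<times> ('x + 'th + 'u)) option \<Rightarrow> real) (y::av \<Rightarrow> real). s * ((\<Sum>j\<in>J i. y (Mu t i j)) - 1))"
        and p: "p \<in> {..<N} \<times> {..<K} \<times> {1,-1}"
      obtain t i s where p': "p = (t, (i, s))" by (cases p) auto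
      have t: "t < N" and i: "i < K" using p p' by auto
      have "sum (\<mu>t t i) (J i) = 1" using KKt[OF t] i unfolding KK_def by blast
      then show "lc z y \<le> 0" unfolding lc p' by simp
    qed
    have c17: "\<forall>lc\<in>C17. lc z y \<le> 0" unfolding C17_def SJ_def
      using mub by auto
    have c18: "\<forall>lc\<in>C18. lc z y \<le> 0" unfolding C18_def
    proof (intro ballI, elim imageE)
      fix lc p assume lc: "lc = (case p of (t, ijj) \<Rightarrow> bigM (\<lambda>z y. affE t (fst ijj) (fst (snd ijj)) z - affE t (fst ijj) (snd (snd ijj)) z) (Ta t (fst ijj) (fst (snd ijj))))"
        and p: "p \<in> {..<N} \<times> (SIGMA i:{..<K}. J i \<times> J i)"
      obtain t i j j' where p': "p = (t, (i, (j, j')))" by (cases p) auto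
      have t: "t < N" and i: "i < K" and j: "j \<in> J i" and j': "j' \<in> J i" using p p' by auto
      have "bigM (\<lambda>z y. affE t i j z - affE t i j' z) (Ta t i j) z y \<le> 0"
      proof (rule bigM_ok[OF r18[OF t] bz by'])
        show "y (Ta t i j) = 0 \<or> y (Ta t i j) = 1" by simp
        assume "y (Ta t i j) = 1"
        then have "0 < \<mu>t t i j" by (simp split: if_splits)
        then have "F i j \<bullet> vcat (h (X t) (U t)) (vcat (U t) (vcat (\<Theta> t) (\<pi> t))) + \<zeta> i j
                     \<le> F i j' \<bullet> vcat (h (X t) (U t)) (vcat (U t) (vcat (\<Theta> t) (\<pi> t))) + \<zeta> i j'"
          using KKt[OF t] i j j' unfolding KK_def by blast
        then show "affE t i j z - affE t i j' z \<le> 0" using t by (simp add: affE_def hvt zUe zTe)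
      qed
      then show "lc z y \<le> 0" unfolding lc p' by simp
    qed
    have yint: "\<forall>j\<in>KI. y j \<in> \<int>"
    proof
      fix a assume "a \<in> KI"
      then show "y a \<in> \<int>" unfolding KI_def JD_def JP_def JT_def
        using YN YO by auto
    qed
    have z0: "\<forall>i. i \<notin> I \<longrightarrow> z i = 0" using zenc enc_zero unfolding I_def by blast
    have "\<forall>lc\<in>Cs. lc z y \<le> 0" unfolding Cs_def ball_Un
      using c1 c2 c3 c4 c5 c6 c7 c8 c9 c10 c11 c12 c13 c14 c15 c16 c17 c18 by blast
    then show ?thesis unfolding RHS_def using z0 yint by blast
  qed
  have eq: "mle_hypo N Xs Us Ths f h g \<pi> p\<nu> p\<omega> D C xt yt nx nu tx tu = RHS"
    using sub sup by blast
  show ?thesis unfolding eq RHS_def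
    using master[OF fI finJA KIJA finCs lin] unfolding I_def .
qed

end
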